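(* Let $P$ be the uniform probability distribution on the (closed) equilateral triangle $\triangle$ with vertices $(0,0)$, $(1,0)$, $(\frac12,\frac{\sqrt3}{2})$. Then there are exactly three optimal sets of two-means for $P$, and the corresponding quantization error is $V_2(P)=0.0532767$ (to seven decimal places). Moreover, if $\triangle$ is cut by a straight line parallel to one of its sides into an isosceles trapezoid and an equilateral triangle whose areas are in the golden ratio $g=\frac{1+\sqrt5}{2}$ (area of trapezoid : area of small triangle $= g$), then the centroids of the isosceles trapezoid and of the small equilateral triangle form an optimal set of two-means for $P$.
   Context: For a Borel probability measure $P$ on $\mathbb R^2$ with finite second moment and $n\ge1$, the $n$th quantization error is $V_n(P)=\inf\{\int \min_{a\in\alpha}\|x-a\|^2\,dP(x): \alpha\subset\mathbb R^2,\ \mathrm{card}(\alpha)\le n\}$, where $\|\cdot\|$ is the Euclidean norm. A set $\alpha$ with $\mathrm{card}(\alpha)\le n$ attaining this infimum is called an optimal set of $n$-means. The uniform distribution on $\triangle$ has density $\frac{4}{\sqrt3}$ on $\triangle$ and $0$ elsewhere. *)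

theory Defs
  imports "HOL-Analysis.Analysis" "HOL-Probability.Probability"
begin

text \<open>Points of the plane are pairs of reals; the norm on real \<times> real is the Euclidean one.\<close>

definition tri :: "(real \<times> real) set" where
  "tri = convex hull {(0,0), (1,0), (1/2, sqrt 3 / 2)}"

definition P_tri :: "(real \<times> real) measure" where
  "P_tri = density lborel (\<lambda>x. ennreal (4 / sqrt 3) * indicator tri x)"

definition distortion :: "(real \<times> real) measure \<Rightarrow> (real \<times> real) set \<Rightarrow> ennreal" where
  "distortion P \<alpha> = (\<integral>\<^sup>+ x. ennreal (Min ((\<lambda>a. (dist x a)\<^sup>2) ` \<alpha>)) \<partial>P)"

definition admissible :: "nat \<Rightarrow> (real \<times> real) set \<Rightarrow> bool" where
  "admissible n \<alpha> \<longleftrightarrow> finite \<alpha> \<and> \<alpha> \<noteq> {} \<and> card \<alpha> \<le> n"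

definition quant_err :: "(real \<times> real) measure \<Rightarrow> nat \<Rightarrow> ennreal" where
  "quant_err P n = (INF \<alpha> \<in> {\<alpha>. admissible n \<alpha>}. distortion P \<alpha>)"

definition optimal_set :: "(real \<times> real) measure \<Rightarrow> nat \<Rightarrow> (real \<times> real) set \<Rightarrow> bool" where
  "optimal_set P n \<alpha> \<longleftrightarrow> admissible n \<alpha> \<and> distortion P \<alpha> = quant_err P n"

definition centroid :: "(real \<times> real) set \<Rightarrow> real \<times> real" where
  "centroid S = (1 / measure lborel S) *\<^sub>R (LINT x:S|lborel. x)"

definition golden :: real where
  "golden = (1 + sqrt 5) / 2"

end

theory Submission
  imports Defs
begin


lemma cv_x:
  fixes f :: "real \<times> real \<Rightarrow> ennreal"
  assumes [measurable]: "f \<in> borel_measurable borel" and a: "a \<noteq> 0"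
  shows "(\<integral>\<^sup>+x. f x \<partial>lborel) = ennreal \<bar>a\<bar> * (\<integral>\<^sup>+z. f (t + a * fst z + k * snd z, snd z) \<partial>lborel)"
proof -
  have "(\<integral>\<^sup>+x. f x \<partial>lborel) = (\<integral>\<^sup>+x. f x \<partial>(lborel \<Otimes>\<^sub>M lborel))"
    by (simp add: lborel_prod)
  also have "\<dots> = (\<integral>\<^sup>+ y. (\<integral>\<^sup>+ x. f (x, y) \<partial>lborel) \<partial>lborel)"
    by (rule lborel_pair.nn_integral_snd[symmetric]) (simp add: lborel_prod)
  also have "\<dots> = (\<integral>\<^sup>+ y. ennreal \<bar>a\<bar> * (\<integral>\<^sup>+ x. f ((t + k * y) + a * x, y) \<partial>lborel) \<partial>lborel)"
    by (intro nn_integral_cong nn_integral_real_affine) (auto simp: a)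
  also have "\<dots> = ennreal \<bar>a\<bar> * (\<integral>\<^sup>+ y. (\<integral>\<^sup>+ x. f ((t + k * y) + a * x, y) \<partial>lborel) \<partial>lborel)"
    by (rule nn_integral_cmult) measurable
  also have "(\<integral>\<^sup>+ y. (\<integral>\<^sup>+ x. f ((t + k * y) + a * x, y) \<partial>lborel) \<partial>lborel)
      = (\<integral>\<^sup>+z. f (t + a * fst z + k * snd z, snd z) \<partial>(lborel \<Otimes>\<^sub>M lborel))"
    by (subst lborel_pair.nn_integral_snd[symmetric]) (auto simp: algebra_simps)
  finally show ?thesis by (simp add: lborel_prod)
qed

lemma cv_y:
  fixes f :: "real \<times> real \<Rightarrow> ennreal"
  assumes [measurable]: "f \<in> borel_measurable borel" and a: "d \<noteq> 0"
  shows "(\<integral>\<^sup>+x. f x \<partial>lborel) = ennreal \<bar>d\<bar> * (\<integral>\<^sup>+z. f (fst z, t + d * snd z + k * fst z) \<partial>lborel)"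
proof -
  have "(\<integral>\<^sup>+x. f x \<partial>lborel) = (\<integral>\<^sup>+x. f x \<partial>(lborel \<Otimes>\<^sub>M lborel))"
    by (simp add: lborel_prod)
  also have "\<dots> = (\<integral>\<^sup>+ x. (\<integral>\<^sup>+ y. f (x, y) \<partial>lborel) \<partial>lborel)"
    by (rule lborel.nn_integral_fst[symmetric]) (simp add: lborel_prod)
  also have "\<dots> = (\<integral>\<^sup>+ x. ennreal \<bar>d\<bar> * (\<integral>\<^sup>+ y. f (x, (t + k * x) + d * y) \<partial>lborel) \<partial>lborel)"
    by (intro nn_integral_cong nn_integral_real_affine) (auto simp: a)
  also have "\<dots> = ennreal \<bar>d\<bar> * (\<integral>\<^sup>+ x. (\<integral>\<^sup>+ y. f (x, (t + k * x) + d * y) \<partial>lborel) \<partial>lborel)"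
    by (rule nn_integral_cmult) measurable
  also have "(\<integral>\<^sup>+ x. (\<integral>\<^sup>+ y. f (x, (t + k * x) + d * y) \<partial>lborel) \<partial>lborel)
      = (\<integral>\<^sup>+z. f (fst z, t + d * snd z + k * fst z) \<partial>(lborel \<Otimes>\<^sub>M lborel))"
    by (subst lborel.nn_integral_fst[symmetric]) (auto simp: algebra_simps)
  finally show ?thesis by (simp add: lborel_prod)
qed

lemma cv_affine:
  fixes f :: "real \<times> real \<Rightarrow> ennreal"
  assumes [measurable]: "f \<in> borel_measurable borel" and a: "a \<noteq> 0" and det: "a * d - b * c \<noteq> 0"
  shows "(\<integral>\<^sup>+x. f x \<partial>lborel) = ennreal \<bar>a * d - b * c\<bar> *
     (\<integral>\<^sup>+z. f (px + a * fst z + b * snd z, py + c * fst z + d * snd z) \<partial>lborel)"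
proof -
  define e where "e = (a * d - b * c) / a"
  have e: "e \<noteq> 0" using a det by (simp add: e_def)
  have "(\<integral>\<^sup>+x. f x \<partial>lborel) = ennreal \<bar>e\<bar> * (\<integral>\<^sup>+w. f (fst w, (py - c/a* px) + e * snd w + (c/a) * fst w) \<partial>lborel)"
    by (rule cv_y[OF _ e]) simp
  also have "(\<integral>\<^sup>+w. f (fst w, (py - c/a* px) + e * snd w + (c/a) * fst w) \<partial>lborel)
     = ennreal \<bar>a\<bar> * (\<integral>\<^sup>+z. f (px + a * fst z + b * snd z, (py - c/a* px) + e * snd z + (c/a) * (px + a * fst z + b * snd z)) \<partial>lborel)"
  proof -
    have g: "(\<lambda>w::real\<times>real. (fst w, (py - c/a* px) + e * snd w + (c/a) * fst w)) \<in> borel_measurable borel"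
      by (intro borel_measurable_continuous_onI continuous_intros)
    have m: "(\<lambda>w. f (fst w, (py - c/a* px) + e * snd w + (c/a) * fst w)) \<in> borel_measurable borel"
      using measurable_compose[OF g assms(1)] by (simp add: o_def)
    show ?thesis using cv_x[OF m a, of px b] by simp
  qed
  also have "(\<lambda>z. f (px + a * fst z + b * snd z, (py - c/a* px) + e * snd z + (c/a) * (px + a * fst z + b * snd z)))
     = (\<lambda>z. f (px + a * fst z + b * snd z, py + c * fst z + d * snd z))"
    using a by (auto simp: e_def field_simps intro!: ext arg_cong[where f=f])
  finally have "(\<integral>\<^sup>+x. f x \<partial>lborel) = (ennreal \<bar>e\<bar> * ennreal \<bar>a\<bar>) *
     (\<integral>\<^sup>+z. f (px + a * fst z + b * snd z, py + c * fst z + d * snd z) \<partial>lborel)"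
    by (simp add: mult.assoc)
  also have "ennreal \<bar>e\<bar> * ennreal \<bar>a\<bar> = ennreal \<bar>a * d - b * c\<bar>"
  proof -
    have "\<bar>e\<bar> * \<bar>a\<bar> = \<bar>a * d - b * c\<bar>" using a unfolding e_def abs_mult[symmetric] by simp
    thus ?thesis by (simp add: ennreal_mult'[symmetric])
  qed
  finally show ?thesis .
qed


lemma ftc_nn:
  fixes f F :: "real \<Rightarrow> real"
  assumes ab: "a \<le> b" and nn: "\<And>x. a \<le> x \<Longrightarrow> x \<le> b \<Longrightarrow> 0 \<le> f x"
    and der: "\<And>x. (F has_real_derivative f x) (at x)"
  shows "(\<integral>\<^sup>+x. ennreal (f x) * indicator {a..b} x \<partial>lborel) = ennreal (F b - F a) \<and> 0 \<le> F b - F a"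
proof -
  have hi: "(f has_integral F b - F a) {a..b}"
    using ab der
    by (intro fundamental_theorem_of_calculus)
       (auto simp: has_real_derivative_iff_has_vector_derivative[symmetric] intro: has_field_derivative_at_within)
  have "0 \<le> F b - F a" using has_integral_nonneg[OF hi] nn by auto
  moreover have "(\<integral>\<^sup>+x. ennreal (f x) * indicator {a..b} x \<partial>lborel) = ennreal (F b - F a)"
    using nn hi by (intro nn_integral_has_integral_lebesgue') auto
  ultimately show ?thesis by simp
qed

definition Dl :: "(real \<times> real) set" where
  "Dl = {z. 0 \<le> fst z \<and> 0 \<le> snd z \<and> fst z + snd z \<le> 1}"

lemma Dl_closed: "closed Dl"
  unfolding Dl_def
  by (intro closed_Collect_conj closed_Collect_le continuous_intros)

lemma Dl_meas[measurable]: "Dl \<in> sets borel"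
  using Dl_closed by (rule borel_closed)

lemma int_poly_Dl:
  fixes p :: "real \<times> real \<Rightarrow> real"
  assumes nn: "\<And>z. z \<in> Dl \<Longrightarrow> 0 \<le> p z"
    and pe: "\<And>x y. p (x,y) = c0 + c1* x + c2* y + c11* x^2 + c12* x* y + c22* y^2"
  shows "(\<integral>\<^sup>+z. indicator Dl z * ennreal (p z) \<partial>lborel)
     = ennreal (c0/2 + c1/6 + c2/6 + c11/12 + c12/24 + c22/12) \<and> 0 \<le> c0/2 + c1/6 + c2/6 + c11/12 + c12/24 + c22/12"
proof -
  have pc: "continuous_on UNIV p"
  proof -
    have "p = (\<lambda>z. c0 + c1* fst z + c2* snd z + c11 * (fst z)^2 + c12* fst z* snd z + c22 * (snd z)^2)"
      by (auto intro!: ext simp: pe split: prod.splits)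
    thus ?thesis by (simp add: continuous_intros)
  qed
  hence pm[measurable]: "p \<in> borel_measurable borel" by (rule borel_measurable_continuous_onI)
  define F where "F y x = c0* x + c1* x^2/2 + c2* y* x + c11* x^3/3 + c12* y* x^2/2 + c22* y^2* x" for y x :: real
  define Q where "Q y = F y (1-y) - F y 0" for y
  define H where "H y = - c0 * (1-y)^2/2 - c1 * (1-y)^3/6 + c2 * (y^2/2 - y^3/3) - c11 * (1-y)^4/12
       + c12 * (y^2/4 - y^3/3 + y^4/8) + c22 * (y^3/3 - y^4/4)" for y :: real
  have inner: "(\<integral>\<^sup>+x. indicator Dl (x,y) * ennreal (p (x,y)) \<partial>lborel) = ennreal (Q y) * indicator {0..1} y
       \<and> (y \<in> {0..1} \<longrightarrow> 0 \<le> Q y)" for y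
  proof (cases "y \<in> {0..1}")
    case True
    have eq: "indicator Dl (x,y) * ennreal (p (x,y)) = ennreal (p (x,y)) * indicator {0..1-y} x" for x
      using True by (auto simp: Dl_def split: split_indicator)
    have "(\<integral>\<^sup>+x. ennreal (p (x,y)) * indicator {0..1-y} x \<partial>lborel) = ennreal (F y (1-y) - F y 0) \<and> 0 \<le> F y (1-y) - F y 0"
    proof (rule ftc_nn)
      show "0 \<le> 1 - y" using True by auto
      show "0 \<le> p (x, y)" if "0 \<le> x" "x \<le> 1 - y" for x using nn[of "(x,y)"] that True by (auto simp: Dl_def)
      show "(F y has_real_derivative p (x, y)) (at x)" for x
        unfolding F_def pe
        by (auto intro!: derivative_eq_intros simp: field_simps power2_eq_square)
    qed
    then show ?thesis using True by (simp add: eq Q_def)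
  next
    case False
    then have "indicator Dl (x,y) = (0::ennreal)" for x by (auto simp: Dl_def split: split_indicator)
    then show ?thesis using False by auto
  qed
  have "(\<integral>\<^sup>+z. indicator Dl z * ennreal (p z) \<partial>lborel)
      = (\<integral>\<^sup>+z. indicator Dl z * ennreal (p z) \<partial>(lborel \<Otimes>\<^sub>M lborel))"
    by (simp add: lborel_prod)
  also have "\<dots> = (\<integral>\<^sup>+ y. (\<integral>\<^sup>+ x. indicator Dl (x,y) * ennreal (p (x,y)) \<partial>lborel) \<partial>lborel)"
    by (rule lborel_pair.nn_integral_snd[symmetric]) (simp add: lborel_prod)
  also have "\<dots> = (\<integral>\<^sup>+ y. ennreal (Q y) * indicator {0..1} y \<partial>lborel)"
    using inner by simp
  finally have main: "(\<integral>\<^sup>+z. indicator Dl z * ennreal (p z) \<partial>lborel) = (\<integral>\<^sup>+ y. ennreal (Q y) * indicator {0..1} y \<partial>lborel)" .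
  have hh: "(\<integral>\<^sup>+ y. ennreal (Q y) * indicator {0..1} y \<partial>lborel) = ennreal (H 1 - H 0) \<and> 0 \<le> H 1 - H 0"
    proof (rule ftc_nn)
      show "0 \<le> Q y" if "0 \<le> y" "y \<le> 1" for y using inner[of y] that by auto
      show "(H has_real_derivative Q y) (at y)" for y
        unfolding H_def Q_def F_def
        by (auto intro!: derivative_eq_intros simp: field_simps power2_eq_square power3_eq_cube)
    qed simp
  have hv: "H 1 - H 0 = c0/2 + c1/6 + c2/6 + c11/12 + c12/24 + c22/12"
    by (simp add: H_def field_simps)
  show ?thesis using main hh hv by simp
qed


lemma dist2_pair: "(dist x y)^2 = (fst x - fst y)^2 + (snd x - snd y)^2" for x y :: "real \<times> real"
  by (cases x, cases y) (simp add: dist_Pair_Pair dist_real_def)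

lemma inner_pair: "x \<bullet> y = fst x * fst y + snd x * snd y" for x y :: "real \<times> real"
  by (simp add: inner_prod_def)

locale lab =
  fixes P0 P1 P2 :: "real \<times> real"
  assumes hull: "tri = convex hull {P0, P1, P2}"
    and g11: "(fst P1 - fst P0)^2 + (snd P1 - snd P0)^2 = 1"
    and g22: "(fst P2 - fst P0)^2 + (snd P2 - snd P0)^2 = 1"
    and g12: "(fst P1 - fst P0) * (fst P2 - fst P0) + (snd P1 - snd P0) * (snd P2 - snd P0) = 1/2"
    and nz: "fst P1 - fst P0 \<noteq> 0"
begin

definition "e1x = fst P1 - fst P0"
definition "e1y = snd P1 - snd P0"
definition "e2x = fst P2 - fst P0"
definition "e2y = snd P2 - snd P0"

definition Phi :: "real \<times> real \<Rightarrow> real \<times> real" where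
  "Phi z = (fst P0 + e1x * fst z + e2x * snd z, snd P0 + e1y * fst z + e2y * snd z)"

definition al1 :: "real \<times> real \<Rightarrow> real" where "al1 a = e1x * (fst a - fst P0) + e1y * (snd a - snd P0)"
definition al2 :: "real \<times> real \<Rightarrow> real" where "al2 a = e2x * (fst a - fst P0) + e2y * (snd a - snd P0)"
definition nrm :: "real \<times> real \<Rightarrow> real" where "nrm a = (fst a - fst P0)^2 + (snd a - snd P0)^2"

lemma G11: "e1x^2 + e1y^2 = 1" using g11 by (simp add: e1x_def e1y_def)
lemma G22: "e2x^2 + e2y^2 = 1" using g22 by (simp add: e2x_def e2y_def)
lemma G12: "e1x * e2x + e1y * e2y = 1/2" using g12 by (simp add: e1x_def e1y_def e2x_def e2y_def)

lemma det_sq: "(e1x * e2y - e2x * e1y)^2 = 3/4"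
proof -
  have "(e1x * e2y - e2x * e1y)^2 = (e1x^2 + e1y^2) * (e2x^2 + e2y^2) - (e1x * e2x + e1y * e2y)^2"
    by (simp add: power2_eq_square algebra_simps)
  also have "\<dots> = 1 - (1/2)^2" by (simp add: G11 G22 G12)
  finally show ?thesis by (simp add: power2_eq_square)
qed

lemma det_abs: "\<bar>e1x * e2y - e2x * e1y\<bar> = sqrt 3 / 2"
proof -
  have "\<bar>e1x * e2y - e2x * e1y\<bar> = sqrt ((e1x * e2y - e2x * e1y)^2)" by simp
  also have "\<dots> = sqrt (3/4)" by (simp add: det_sq)
  also have "\<dots> = sqrt 3 / 2" by (simp add: real_sqrt_divide)
  finally show ?thesis .
qed

lemma det_nz: "e1x * e2y - e2x * e1y \<noteq> 0"
  using det_sq by auto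

lemma gram: "x^2 + y^2 = 4/3 * ((e1x* x + e1y* y)^2 - (e1x* x + e1y* y) * (e2x* x + e2y* y) + (e2x* x + e2y* y)^2)"
proof -
  have "(e1x * e2y - e2x * e1y)^2 * (x^2 + y^2) = (e2x^2 + e2y^2) * (e1x* x + e1y* y)^2
     - 2 * (e1x * e2x + e1y * e2y) * (e1x* x + e1y* y) * (e2x* x + e2y* y) + (e1x^2 + e1y^2) * (e2x* x + e2y* y)^2"
    by (simp add: power2_eq_square algebra_simps)
  from this[unfolded det_sq G11 G22 G12] show ?thesis by (simp add: algebra_simps)
qed

lemma dist_Phi: "(dist (Phi z) a)^2 = (fst z)^2 + fst z * snd z + (snd z)^2 - 2 * fst z * al1 a - 2 * snd z * al2 a + nrm a"
proof -
  have "(dist (Phi z) a)^2 = (fst z)^2 * (e1x^2 + e1y^2) + 2 * fst z * snd z * (e1x * e2x + e1y * e2y)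
      + (snd z)^2 * (e2x^2 + e2y^2) - 2 * fst z * al1 a - 2 * snd z * al2 a + nrm a"
    unfolding dist2_pair by (simp add: Phi_def al1_def al2_def nrm_def power2_eq_square algebra_simps)
  thus ?thesis by (simp add: G11 G22 G12)
qed

lemma Phi_inj: "Phi z = Phi w \<Longrightarrow> z = w"
proof -
  assume "Phi z = Phi w"
  hence h1: "e1x * (fst z - fst w) + e2x * (snd z - snd w) = 0" and h2: "e1y * (fst z - fst w) + e2y * (snd z - snd w) = 0"
    by (auto simp: Phi_def algebra_simps)
  have "(e1x * e2y - e2x * e1y) * (fst z - fst w) = e2y * (e1x * (fst z - fst w) + e2x * (snd z - snd w)) - e2x * (e1y * (fst z - fst w) + e2y * (snd z - snd w))"
    by (simp add: algebra_simps)
  hence "fst z = fst w" using h1 h2 det_nz by simp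
  moreover have "(e1x * e2y - e2x * e1y) * (snd z - snd w) = e1x * (e1y * (fst z - fst w) + e2y * (snd z - snd w)) - e1y * (e1x * (fst z - fst w) + e2x * (snd z - snd w))"
    by (simp add: algebra_simps)
  hence "snd z = snd w" using h1 h2 det_nz by simp
  ultimately show "z = w" by (simp add: prod_eq_iff)
qed

lemma Phi_conv: "Phi z = (1 - fst z - snd z) *\<^sub>R P0 + fst z *\<^sub>R P1 + snd z *\<^sub>R P2"
  by (simp add: Phi_def e1x_def e1y_def e2x_def e2y_def prod_eq_iff algebra_simps)

lemma Phi_tri: "Phi z \<in> tri \<longleftrightarrow> z \<in> Dl"
proof
  assume "z \<in> Dl"
  hence "\<exists>u v w. Phi z = u *\<^sub>R P0 + v *\<^sub>R P1 + w *\<^sub>R P2 \<and> 0 \<le> u \<and> 0 \<le> v \<and> 0 \<le> w \<and> u + v + w = 1"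
    by (intro exI[of _ "1 - fst z - snd z"] exI[of _ "fst z"] exI[of _ "snd z"]) (auto simp: Phi_conv Dl_def)
  then show "Phi z \<in> tri" unfolding hull convex_hull_3 by blast
next
  assume "Phi z \<in> tri"
  then obtain u v w where uvw: "0 \<le> u" "0 \<le> v" "0 \<le> w" "u + v + w = 1" "Phi z = u *\<^sub>R P0 + v *\<^sub>R P1 + w *\<^sub>R P2"
    unfolding hull convex_hull_3 by auto
  have "Phi z = Phi (v, w)" using uvw by (simp add: Phi_conv)
  hence "z = (v, w)" by (rule Phi_inj)
  thus "z \<in> Dl" using uvw by (auto simp: Dl_def)
qed

lemma tri_closed: "closed tri"
  unfolding hull by (intro compact_imp_closed compact_convex_hull finite_imp_compact) simp

lemma Phi_cont: "continuous_on UNIV Phi"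
  unfolding Phi_def by (intro continuous_intros)

lemma cv_tri:
  fixes f :: "real \<times> real \<Rightarrow> ennreal"
  assumes [measurable]: "f \<in> borel_measurable borel"
  shows "(\<integral>\<^sup>+x. f x \<partial>P_tri) = ennreal 2 * (\<integral>\<^sup>+z. indicator Dl z * f (Phi z) \<partial>lborel)"
proof -
  have tm[measurable]: "tri \<in> sets borel" using tri_closed by (rule borel_closed)
  have "(\<integral>\<^sup>+x. f x \<partial>P_tri) = (\<integral>\<^sup>+x. (ennreal (4 / sqrt 3) * indicator tri x) * f x \<partial>lborel)"
    unfolding P_tri_def by (subst nn_integral_density) auto
  also have "\<dots> = ennreal \<bar>e1x * e2y - e2x * e1y\<bar> *
     (\<integral>\<^sup>+z. (ennreal (4 / sqrt 3) * indicator tri (Phi z)) * f (Phi z) \<partial>lborel)"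
    using cv_affine[where f="\<lambda>x. (ennreal (4 / sqrt 3) * indicator tri x) * f x" and a=e1x and b=e2x and c=e1y and d=e2y
        and px="fst P0" and py="snd P0"] nz det_nz
    by (simp add: Phi_def e1x_def)
  also have "\<dots> = ennreal (sqrt 3 / 2) * (\<integral>\<^sup>+z. ennreal (4 / sqrt 3) * (indicator Dl z * f (Phi z)) \<partial>lborel)"
    by (simp add: det_abs indicator_def Phi_tri mult.assoc)
  also have "\<dots> = ennreal (sqrt 3 / 2) * ennreal (4 / sqrt 3) * (\<integral>\<^sup>+z. indicator Dl z * f (Phi z) \<partial>lborel)"
  proof -
    have [measurable]: "Phi \<in> borel_measurable borel" using Phi_cont by (rule borel_measurable_continuous_onI)
    show ?thesis by (subst nn_integral_cmult) (auto simp: mult.assoc)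
  qed
  also have "ennreal (sqrt 3 / 2) * ennreal (4 / sqrt 3) = ennreal 2"
    by (simp add: ennreal_mult'[symmetric])
  finally show ?thesis .
qed

end


context lab begin

lemma Phi_meas[measurable]: "Phi \<in> borel_measurable borel"
  using Phi_cont by (rule borel_measurable_continuous_onI)

definition Rs :: "real \<Rightarrow> real \<Rightarrow> (real \<times> real) set" where
  "Rs u v = {z. 0 \<le> fst z \<and> 0 \<le> snd z \<and> v * fst z + u * snd z \<le> u * v}"

lemma Rs_meas[measurable]: "Rs u v \<in> sets borel"
  unfolding Rs_def
  by (intro borel_closed closed_Collect_conj closed_Collect_le continuous_intros)

lemma int_Dl_a: "(\<integral>\<^sup>+z. indicator Dl z * ennreal ((dist (Phi z) a)^2) \<partial>lborel)
   = ennreal (nrm a/2 - (al1 a + al2 a)/3 + 5/24)"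
proof -
  have "(\<integral>\<^sup>+z. indicator Dl z * ennreal ((dist (Phi z) a)^2) \<partial>lborel)
     = ennreal (nrm a/2 + (-2 * al1 a)/6 + (-2 * al2 a)/6 + 1/12 + 1/24 + 1/12)"
    apply (rule int_poly_Dl[THEN conjunct1])
     apply simp
    apply (simp only: dist_Phi fst_conv snd_conv)
    apply (simp add: power2_eq_square algebra_simps)
    done
  also have "nrm a/2 + (-2 * al1 a)/6 + (-2 * al2 a)/6 + 1/12 + 1/24 + 1/12 = nrm a/2 - (al1 a + al2 a)/3 + 5/24"
    by (simp add: field_simps)
  finally show ?thesis .
qed

definition IR :: "real \<times> real \<Rightarrow> real \<Rightarrow> real \<Rightarrow> real" where
  "IR a u v = u * v * (nrm a / 2 - al1 a * u / 3 - al2 a * v / 3 + u^2 / 12 + u * v / 24 + v^2 / 12)"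

lemma int_R_a:
  assumes u: "0 < u" and v: "0 < v"
  shows "(\<integral>\<^sup>+z. indicator (Rs u v) z * ennreal ((dist (Phi z) a)^2) \<partial>lborel) = ennreal (IR a u v)"
proof -
  have "(\<integral>\<^sup>+z. indicator (Rs u v) z * ennreal ((dist (Phi z) a)^2) \<partial>lborel)
     = ennreal \<bar>u * v - 0 * 0\<bar> * (\<integral>\<^sup>+w. indicator (Rs u v) (0 + u * fst w + 0 * snd w, 0 + 0 * fst w + v * snd w)
          * ennreal ((dist (Phi (0 + u * fst w + 0 * snd w, 0 + 0 * fst w + v * snd w)) a)^2) \<partial>lborel)"
    by (rule cv_affine) (use u v in auto)
  also have "\<dots> = ennreal (u * v) * (\<integral>\<^sup>+w. indicator Dl w * ennreal ((dist (Phi (u * fst w, v * snd w)) a)^2) \<partial>lborel)"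
  proof -
    have "indicator (Rs u v) (u * fst w, v * snd w) = (indicator Dl w :: ennreal)" for w
    proof -
      have "(u * fst w, v * snd w) \<in> Rs u v \<longleftrightarrow> w \<in> Dl"
      proof -
        have "v * (u * fst w) + u * (v * snd w) = (u* v) * (fst w + snd w)" by (simp add: algebra_simps)
        thus ?thesis using u v by (simp add: Rs_def Dl_def zero_le_mult_iff)
      qed
      thus ?thesis by (simp add: indicator_def)
    qed
    thus ?thesis using u v by simp
  qed
  also have "(\<integral>\<^sup>+w. indicator Dl w * ennreal ((dist (Phi (u * fst w, v * snd w)) a)^2) \<partial>lborel)
     = ennreal (nrm a/2 + (-2 * al1 a * u)/6 + (-2 * al2 a * v)/6 + u^2/12 + (u* v)/24 + v^2/12)"
    apply (rule int_poly_Dl[THEN conjunct1])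
     apply simp
    apply (simp only: dist_Phi fst_conv snd_conv)
    apply (simp add: power2_eq_square algebra_simps)
    done
  also have "ennreal (u * v) * ennreal (nrm a/2 + (-2 * al1 a * u)/6 + (-2 * al2 a * v)/6 + u^2/12 + (u* v)/24 + v^2/12)
     = ennreal (IR a u v)"
  proof -
    have "0 \<le> u * v" using u v by simp
    hence "ennreal (u * v) * ennreal (nrm a/2 + (-2 * al1 a * u)/6 + (-2 * al2 a * v)/6 + u^2/12 + (u* v)/24 + v^2/12)
       = ennreal (u * v * (nrm a/2 + (-2 * al1 a * u)/6 + (-2 * al2 a * v)/6 + u^2/12 + (u* v)/24 + v^2/12))"
      by (simp add: ennreal_mult')
    also have "u * v * (nrm a/2 + (-2 * al1 a * u)/6 + (-2 * al2 a * v)/6 + u^2/12 + (u* v)/24 + v^2/12) = IR a u v"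
      by (simp add: IR_def field_simps)
    finally show ?thesis .
  qed
  finally show ?thesis .
qed

end


context lab begin

definition ID :: "real \<times> real \<Rightarrow> real" where
  "ID a = nrm a/2 - (al1 a + al2 a)/3 + 5/24"

lemma ID_nn: "0 \<le> ID a"
proof -
  have "0 \<le> nrm a/2 + (-2 * al1 a)/6 + (-2 * al2 a)/6 + 1/12 + 1/24 + 1/12"
    apply (rule int_poly_Dl[where p="\<lambda>w. (dist (Phi w) a)^2", THEN conjunct2])
     apply simp
    apply (simp only: dist_Phi fst_conv snd_conv)
    apply (simp add: power2_eq_square algebra_simps)
    done
  thus ?thesis by (simp add: ID_def field_simps)
qed

lemma IR_nn: assumes "0 < u" "0 < v" shows "0 \<le> IR a u v"
proof -
  have "0 \<le> nrm a/2 + (-2 * al1 a * u)/6 + (-2 * al2 a * v)/6 + u^2/12 + (u * v)/24 + v^2/12"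
    apply (rule int_poly_Dl[where p="\<lambda>w. (dist (Phi (u * fst w, v * snd w)) a)^2", THEN conjunct2])
     apply simp
    apply (simp only: dist_Phi fst_conv snd_conv)
    apply (simp add: power2_eq_square algebra_simps)
    done
  hence "0 \<le> u * v * (nrm a/2 + (-2 * al1 a * u)/6 + (-2 * al2 a * v)/6 + u^2/12 + (u * v)/24 + v^2/12)"
    using assms by simp
  thus ?thesis by (simp add: IR_def field_simps)
qed

lemma int_Dl: "(\<integral>\<^sup>+z. indicator Dl z * ennreal ((dist (Phi z) a)^2) \<partial>lborel) = ennreal (ID a)"
  using int_Dl_a by (simp add: ID_def)

definition ps :: "real \<times> real \<Rightarrow> real \<times> real \<Rightarrow> real \<times> real \<Rightarrow> real" where
  "ps a b x = (dist x b)^2 - (dist x a)^2"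

lemma Phi00: "Phi (0,0) = P0" by (simp add: Phi_def)
lemma Phi10: "Phi (1,0) = P1" by (simp add: Phi_def e1x_def e1y_def e2x_def e2y_def prod_eq_iff)
lemma Phi01: "Phi (0,1) = P2" by (simp add: Phi_def e1x_def e1y_def e2x_def e2y_def prod_eq_iff)

lemma ps_Phi: "ps a b (Phi z) = (1 - fst z - snd z) * ps a b P0 + fst z * ps a b P1 + snd z * ps a b P2"
proof -
  have pw: "ps a b (Phi w) = nrm b - nrm a - 2 * fst w * (al1 b - al1 a) - 2 * snd w * (al2 b - al2 a)" for w
    unfolding ps_def dist_Phi by (simp add: algebra_simps)
  from this[of "(0,0)"] this[of "(1,0)"] this[of "(0,1)"]
  have e: "ps a b P0 = nrm b - nrm a" "ps a b P1 = nrm b - nrm a - 2 * (al1 b - al1 a)"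
     "ps a b P2 = nrm b - nrm a - 2 * (al2 b - al2 a)"
    unfolding Phi00 Phi10 Phi01 by simp_all
  show ?thesis unfolding e using pw[of z] by (simp add: algebra_simps)
qed

lemma distortion_P: 
  fixes f :: "real \<times> real \<Rightarrow> real"
  assumes "continuous_on UNIV f"
  shows "(\<integral>\<^sup>+x. ennreal (f x) \<partial>P_tri) = ennreal 2 * (\<integral>\<^sup>+z. indicator Dl z * ennreal (f (Phi z)) \<partial>lborel)"
proof -
  have [measurable]: "f \<in> borel_measurable borel" using assms by (rule borel_measurable_continuous_onI)
  show ?thesis by (rule cv_tri) measurable
qed

lemma distortion_one: "distortion P_tri {a} = ennreal (2 * ID a)"
proof -
  have "distortion P_tri {a} = (\<integral>\<^sup>+x. ennreal ((dist x a)^2) \<partial>P_tri)"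
    by (simp add: distortion_def)
  also have "\<dots> = ennreal 2 * ennreal (ID a)"
    by (subst distortion_P) (auto intro!: continuous_intros simp: int_Dl)
  also have "\<dots> = ennreal (2 * ID a)" by (simp add: ennreal_mult')
  finally show ?thesis .
qed

lemma distortion_two: "distortion P_tri {a, b} = ennreal 2 * (\<integral>\<^sup>+z. indicator Dl z * ennreal (min ((dist (Phi z) a)^2) ((dist (Phi z) b)^2)) \<partial>lborel)"
proof -
  have "distortion P_tri {a, b} = (\<integral>\<^sup>+x. ennreal (min ((dist x a)^2) ((dist x b)^2)) \<partial>P_tri)"
    by (simp add: distortion_def)
  also have "\<dots> = ennreal 2 * (\<integral>\<^sup>+z. indicator Dl z * ennreal (min ((dist (Phi z) a)^2) ((dist (Phi z) b)^2)) \<partial>lborel)"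
    by (rule distortion_P[where f="\<lambda>x. min ((dist x a)^2) ((dist x b)^2)"]) (intro continuous_intros)
  finally show ?thesis .
qed

lemma distortion_noSplit:
  assumes "ps a b P0 \<ge> 0" "ps a b P1 \<ge> 0" "ps a b P2 \<ge> 0"
  shows "distortion P_tri {a, b} = ennreal (2 * ID a)"
proof -
  have "indicator Dl z * ennreal (min ((dist (Phi z) a)^2) ((dist (Phi z) b)^2)) = indicator Dl z * ennreal ((dist (Phi z) a)^2)" for z
  proof (cases "z \<in> Dl")
    case True
    hence "ps a b (Phi z) \<ge> 0" unfolding ps_Phi using assms by (auto simp: Dl_def intro!: add_nonneg_nonneg mult_nonneg_nonneg)
    thus ?thesis by (simp add: ps_def)
  qed simp
  hence "distortion P_tri {a, b} = ennreal 2 * ennreal (ID a)"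
    by (simp add: distortion_two int_Dl)
  thus ?thesis by (simp add: ennreal_mult')
qed

end


context lab begin

lemma split_formula:
  assumes h0: "ps a b P0 > 0" and h1: "ps a b P1 \<le> 0" and h2: "ps a b P2 \<le> 0"
  defines "u \<equiv> ps a b P0 / (ps a b P0 - ps a b P1)" and "v \<equiv> ps a b P0 / (ps a b P0 - ps a b P2)"
  shows "distortion P_tri {a, b} = ennreal (2 * (IR a u v + ID b - IR b u v))"
    and "0 < u" "u \<le> 1" "0 < v" "v \<le> 1"
proof -
  define p0 where "p0 = ps a b P0"
  define d1 where "d1 = ps a b P0 - ps a b P1"
  define d2 where "d2 = ps a b P0 - ps a b P2"
  have p0: "0 < p0" and d1: "p0 \<le> d1" and d2: "p0 \<le> d2" using h0 h1 h2 by (auto simp: p0_def d1_def d2_def)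
  have ud: "u = p0 / d1" and vd: "v = p0 / d2" by (simp_all add: u_def v_def p0_def d1_def d2_def)
  show u0: "0 < u" and u1: "u \<le> 1" and v0: "0 < v" and v1: "v \<le> 1"
    using p0 d1 d2 by (auto simp: ud vd)
  have Rs_iff: "z \<in> Rs u v \<longleftrightarrow> 0 \<le> fst z \<and> 0 \<le> snd z \<and> d1 * fst z + d2 * snd z \<le> p0" for z
  proof -
    have "v * fst z + u * snd z \<le> u * v \<longleftrightarrow> (p0 / d2) * fst z + (p0 / d1) * snd z \<le> (p0 / d1) * (p0 / d2)"
      by (simp add: ud vd)
    also have "\<dots> \<longleftrightarrow> d1 * fst z + d2 * snd z \<le> p0"
    proof -
      have pos: "0 < d1 * d2 / p0" using p0 d1 d2 by simp
      have "(p0 / d2) * fst z + (p0 / d1) * snd z \<le> (p0 / d1) * (p0 / d2)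
         \<longleftrightarrow> (d1 * d2 / p0) * ((p0 / d2) * fst z + (p0 / d1) * snd z) \<le> (d1 * d2 / p0) * ((p0 / d1) * (p0 / d2))"
        by (simp only: mult_le_cancel_left_pos[OF pos])
      also have "\<dots> \<longleftrightarrow> d1 * fst z + d2 * snd z \<le> p0"
      proof -
        have "(d1 * d2 / p0) * ((p0 / d2) * fst z + (p0 / d1) * snd z) = d1 * fst z + d2 * snd z"
          using p0 d1 d2 by (simp add: field_simps)
        moreover have "(d1 * d2 / p0) * ((p0 / d1) * (p0 / d2)) = p0"
          using p0 d1 d2 by (simp add: field_simps)
        ultimately show ?thesis by simp
      qed
      finally show ?thesis .
    qed
    finally show ?thesis by (simp add: Rs_def)
  qed
  have sub: "Rs u v \<subseteq> Dl"
  proof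
    fix z assume "z \<in> Rs u v"
    hence z: "0 \<le> fst z" "0 \<le> snd z" "d1 * fst z + d2 * snd z \<le> p0" using Rs_iff by auto
    have "p0 * (fst z + snd z) \<le> d1 * fst z + d2 * snd z"
      using z d1 d2 by (simp add: distrib_left add_mono mult_right_mono)
    hence "p0 * (fst z + snd z) \<le> p0 * 1" using z by simp
    hence "fst z + snd z \<le> 1" using p0 by (simp only: mult_le_cancel_left_pos)
    thus "z \<in> Dl" using z by (simp add: Dl_def)
  qed
  have ps_iff: "z \<in> Dl \<Longrightarrow> (ps a b (Phi z) \<ge> 0 \<longleftrightarrow> z \<in> Rs u v)" for z
  proof -
    assume "z \<in> Dl"
    have "ps a b (Phi z) = p0 - (d1 * fst z + d2 * snd z)"
      unfolding ps_Phi by (simp add: p0_def d1_def d2_def algebra_simps)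
    thus ?thesis using \<open>z \<in> Dl\<close> Rs_iff by (auto simp: Dl_def)
  qed
  define da where "da z = ennreal ((dist (Phi z) a)^2)" for z
  define db where "db z = ennreal ((dist (Phi z) b)^2)" for z
  have [measurable]: "da \<in> borel_measurable borel" "db \<in> borel_measurable borel"
    unfolding da_def db_def by measurable
  have pt: "indicator Dl z * ennreal (min ((dist (Phi z) a)^2) ((dist (Phi z) b)^2))
      = indicator (Rs u v) z * da z + indicator (Dl - Rs u v) z * db z" for z
  proof (cases "z \<in> Dl")
    case True
    then show ?thesis using ps_iff[OF True] sub by (auto simp: ps_def da_def db_def indicator_def)
  next
    case False
    then show ?thesis using sub by (auto simp: indicator_def)
  qed
  have DmR[measurable]: "Dl - Rs u v \<in> sets borel" by measurable
  have "(\<integral>\<^sup>+z. indicator Dl z * ennreal (min ((dist (Phi z) a)^2) ((dist (Phi z) b)^2)) \<partial>lborel)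
     = (\<integral>\<^sup>+z. indicator (Rs u v) z * da z \<partial>lborel) + (\<integral>\<^sup>+z. indicator (Dl - Rs u v) z * db z \<partial>lborel)"
    unfolding pt by (rule nn_integral_add) measurable
  also have "(\<integral>\<^sup>+z. indicator (Rs u v) z * da z \<partial>lborel) = ennreal (IR a u v)"
    unfolding da_def using int_R_a u0 v0 by simp
  finally have E1: "(\<integral>\<^sup>+z. indicator Dl z * ennreal (min ((dist (Phi z) a)^2) ((dist (Phi z) b)^2)) \<partial>lborel)
     = ennreal (IR a u v) + (\<integral>\<^sup>+z. indicator (Dl - Rs u v) z * db z \<partial>lborel)" .
  have "ennreal (ID b) = (\<integral>\<^sup>+z. indicator Dl z * db z \<partial>lborel)"
    unfolding db_def int_Dl ..
  also have "\<dots> = (\<integral>\<^sup>+z. indicator (Rs u v) z * db z + indicator (Dl - Rs u v) z * db z \<partial>lborel)"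
    using sub by (intro nn_integral_cong) (auto simp: indicator_def)
  also have "\<dots> = (\<integral>\<^sup>+z. indicator (Rs u v) z * db z \<partial>lborel) + (\<integral>\<^sup>+z. indicator (Dl - Rs u v) z * db z \<partial>lborel)"
    by (rule nn_integral_add) measurable
  also have "(\<integral>\<^sup>+z. indicator (Rs u v) z * db z \<partial>lborel) = ennreal (IR b u v)"
    unfolding db_def using int_R_a u0 v0 by simp
  finally have E2: "ennreal (ID b) = ennreal (IR b u v) + (\<integral>\<^sup>+z. indicator (Dl - Rs u v) z * db z \<partial>lborel)" .
  have nnb: "0 \<le> IR b u v" "0 \<le> IR a u v" using IR_nn u0 v0 by auto
  have X: "(\<integral>\<^sup>+z. indicator (Dl - Rs u v) z * db z \<partial>lborel) = ennreal (ID b - IR b u v)"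
  proof -
    have "(\<integral>\<^sup>+z. indicator (Dl - Rs u v) z * db z \<partial>lborel) = ennreal (ID b) - ennreal (IR b u v)"
      unfolding E2 by simp
    thus ?thesis using nnb by (simp add: ennreal_minus)
  qed
  have le: "IR b u v \<le> ID b"
  proof -
    have "ennreal (IR b u v) \<le> ennreal (ID b)" unfolding E2 by simp
    thus ?thesis using ID_nn by (simp add: ennreal_le_iff)
  qed
  have "distortion P_tri {a, b} = ennreal 2 * (ennreal (IR a u v) + ennreal (ID b - IR b u v))"
    unfolding distortion_two E1 X ..
  also have "\<dots> = ennreal (2 * (IR a u v + ID b - IR b u v))"
  proof -
    have "ennreal (IR a u v) + ennreal (ID b - IR b u v) = ennreal (IR a u v + (ID b - IR b u v))"
      using nnb le by (intro ennreal_plus[symmetric]) auto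
    moreover have "ennreal 2 * ennreal (IR a u v + (ID b - IR b u v)) = ennreal (2 * (IR a u v + (ID b - IR b u v)))"
      by (rule ennreal_mult'[symmetric]) simp
    ultimately show ?thesis by (simp add: algebra_simps)
  qed
  finally show "distortion P_tri {a, b} = ennreal (2 * (IR a u v + ID b - IR b u v))" .
qed

end


definition sg :: real where "sg = (sqrt 5 - 1) / 2"

lemma sqrt5_bounds: "2.236 < sqrt 5" "sqrt 5 < 2.2361"
proof -
  have "sqrt (2.236^2) < sqrt 5" by (subst real_sqrt_less_iff) (simp add: power2_eq_square)
  thus "2.236 < sqrt 5" by simp
  have "sqrt 5 < sqrt (2.2361^2)" by (subst real_sqrt_less_iff) (simp add: power2_eq_square)
  thus "sqrt 5 < 2.2361" by simp
qed

lemma sg_sq: "sg^2 = 1 - sg"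
proof -
  have "(sqrt 5)^2 = 5" by simp
  thus ?thesis unfolding sg_def by (simp add: power2_eq_square field_simps)
qed

lemma sg_bounds: "0.618 < sg" "sg < 0.6181"
  using sqrt5_bounds unfolding sg_def by auto

definition Gs :: real where "Gs = 15 * sg - 6"

lemma Hp1_factor:
  "Gs * (1 - r^2) - 3 * r^4 + 6 * r^3 - 3 = 3 * (1 - r) * (r - sg)^2 * (r - 1 + 2 * sg)"
proof -
  have e: "sg^2 = 1 - sg" by (rule sg_sq)
  have e3: "sg^3 = 2 * sg - 1"
  proof -
    have "sg^3 = sg * sg^2" by (simp add: power3_eq_cube power2_eq_square)
    also have "\<dots> = 2 * sg - 1" unfolding e by (simp add: algebra_simps power2_eq_square e[unfolded power2_eq_square])
    finally show ?thesis .
  qed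
  have "3 * (1 - r) * (r - sg)^2 * (r - 1 + 2 * sg) =
     3 * (1 - r) * (r^3 - r^2 + (2* sg - 3* sg^2) * r + (2* sg^3 - sg^2))"
    by (simp add: power2_eq_square power3_eq_cube algebra_simps)
  also have "\<dots> = 3 * (1 - r) * (r^3 - r^2 + (5* sg - 3) * r + (5* sg - 3))"
    unfolding e e3 by (simp add: algebra_simps)
  also have "\<dots> = Gs * (1 - r^2) - 3 * r^4 + 6 * r^3 - 3"
    by (simp add: Gs_def power2_eq_square power3_eq_cube power4_eq_xxxx algebra_simps)
  finally show ?thesis ..
qed

definition Gf :: "real \<Rightarrow> real \<Rightarrow> real" where
  "Gf u v = (u* v * (u+v)^2 - 3 * (u* v) * (u+v) + 3 - (u* v)^2) / (1 - u* v)"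

lemma key_ineq:
  assumes u: "0 < u" "u \<le> 1" and v: "0 < v" "v \<le> 1" and q1: "u * v < 1"
  shows "Gf u v \<le> Gs" and "Gf u v = Gs \<Longrightarrow> u = sg \<and> v = sg"
proof -
  define q where "q = u * v"
  define p where "p = u + v"
  define r where "r = sqrt q"
  have q0: "0 < q" "q < 1" using u v q1 by (auto simp: q_def)
  have r: "0 < r" "r < 1" "r^2 = q" using q0 by (auto simp: r_def)
  define H where "H t = Gs * (1 - q) - q * t^2 + 3 * q * t - 3 + q^2" for t
  define p1 where "p1 = 2 * r"
  define p2 where "p2 = 1 + q"
  have pp1: "p1 \<le> p"
    using arith_geo_mean_sqrt[of u v] u v by (simp add: p1_def p_def r_def q_def)
  have pp2: "p \<le> p2"
  proof -
    have "0 \<le> (1 - u) * (1 - v)" using u v by simp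
    thus ?thesis by (simp add: p_def p2_def q_def algebra_simps)
  qed
  have p21: "p2 - p1 = (1 - r)^2" using r by (simp add: p1_def p2_def power2_eq_square algebra_simps)
  have p21pos: "0 < p2 - p1" using r unfolding p21 by simp
  have ident: "(p2 - p1) * H p = (p2 - p) * H p1 + (p - p1) * H p2 + q * (p - p1) * (p2 - p) * (p2 - p1)"
    by (simp add: H_def power2_eq_square algebra_simps)
  have Gs_big: "3.25 < Gs" using sg_bounds by (simp add: Gs_def)
  have Hp2: "0 < H p2"
  proof -
    have "H p2 = (1 - q) * (Gs + q^2 - q - 3)"
      by (simp add: H_def p2_def power2_eq_square algebra_simps)
    moreover have "0 < Gs + q^2 - q - 3"
    proof -
      have "0 \<le> (q - 1/2)^2" by simp
      hence "-1/4 \<le> q^2 - q" by (simp add: power2_eq_square algebra_simps)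
      thus ?thesis using Gs_big by simp
    qed
    ultimately show ?thesis using q0 by simp
  qed
  have Hp1: "H p1 = 3 * (1 - r) * (r - sg)^2 * (r - 1 + 2 * sg)"
  proof -
    have "H p1 = Gs * (1 - r^2) - 3 * r^4 + 6 * r^3 - 3"
      unfolding H_def p1_def r(3)[symmetric] by (simp add: power2_eq_square power3_eq_cube power4_eq_xxxx algebra_simps)
    thus ?thesis using Hp1_factor by simp
  qed
  have f3: "0 < r - 1 + 2 * sg" using r sg_bounds by simp
  have Hp1nn: "0 \<le> H p1" unfolding Hp1 using r f3 by (intro mult_nonneg_nonneg) auto
  have t1: "0 \<le> (p2 - p) * H p1" using pp2 Hp1nn by simp
  have t2: "0 \<le> (p - p1) * H p2" using pp1 Hp2 by simp
  have t3: "0 \<le> q * (p - p1) * (p2 - p) * (p2 - p1)" using q0 pp1 pp2 p21pos by simp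
  have Hp: "0 \<le> H p"
  proof -
    have "0 \<le> (p2 - p1) * H p" unfolding ident using t1 t2 t3 by simp
    thus ?thesis using p21pos by (simp add: zero_le_mult_iff)
  qed
  have GfH: "Gs - Gf u v = H p / (1 - q)"
  proof -
    define X where "X = q* p^2 - 3* q* p + 3 - q^2"
    have "Gf u v = X / (1 - q)" by (simp add: Gf_def q_def p_def X_def)
    moreover have "Gs - X / (1 - q) = (Gs * (1 - q) - X) / (1 - q)" using q0 by (simp add: field_simps)
    moreover have "H p = Gs * (1 - q) - X" by (simp add: H_def X_def)
    ultimately show ?thesis by simp
  qed
  show "Gf u v \<le> Gs" using Hp q0 GfH by (smt (verit) divide_nonneg_pos)
  assume eq: "Gf u v = Gs"
  hence "H p = 0" using GfH q0 by simp
  hence "(p2 - p) * H p1 + (p - p1) * H p2 + q * (p - p1) * (p2 - p) * (p2 - p1) = 0"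
    using ident by simp
  hence z1: "(p2 - p) * H p1 = 0" and z2: "(p - p1) * H p2 = 0" using t1 t2 t3 by linarith+
  have "p = p1" using z2 Hp2 by simp
  hence "H p1 = 0" using z1 p21pos by simp
  hence "(r - sg)^2 = 0" using r f3 unfolding Hp1 by simp
  hence rs: "r = sg" by simp
  have "(u - v)^2 = p^2 - 4 * q" by (simp add: p_def q_def power2_eq_square algebra_simps)
  also have "\<dots> = 0" using \<open>p = p1\<close> r by (simp add: p1_def power2_eq_square)
  finally have uv: "u = v" by simp
  hence "u^2 = sg^2" using r rs by (simp add: q_def power2_eq_square)
  hence "u = sg" using u sg_bounds by (simp add: power2_eq_iff)
  thus "u = sg \<and> v = sg" using uv by simp
qed


definition Qf :: "real \<Rightarrow> real \<Rightarrow> real" where "Qf x y = x^2 - x* y + y^2"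

lemma Qf_nn: "0 \<le> Qf x y"
proof -
  have "Qf x y = (x - y/2)^2 + 3/4 * y^2" by (simp add: Qf_def power2_eq_square algebra_simps)
  thus ?thesis by simp
qed

lemma Qf_zero: "Qf x y = 0 \<Longrightarrow> x = 0 \<and> y = 0"
proof -
  assume "Qf x y = 0"
  moreover have "Qf x y = (x - y/2)^2 + 3/4 * y^2" by (simp add: Qf_def power2_eq_square algebra_simps)
  ultimately have "(x - y/2)^2 + 3/4 * y^2 = 0" by simp
  moreover have "0 \<le> (x - y/2)^2" "0 \<le> 3/4 * y^2" by simp_all
  ultimately have "(x - y/2)^2 = 0" "3/4 * y^2 = 0" by linarith+
  thus ?thesis by simp
qed

definition Dv :: "real \<Rightarrow> real \<Rightarrow> real \<Rightarrow> real \<Rightarrow> real \<Rightarrow> real \<Rightarrow> real" where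
  "Dv u v a1 a2 b1 b2 = (let na = 4/3 * Qf a1 a2; nb = 4/3 * Qf b1 b2 in
     2 * (u * v * (na/2 - a1 * u/3 - a2 * v/3 + u^2/12 + u * v/24 + v^2/12)
        + (nb/2 - (b1 + b2)/3 + 5/24)
        - u * v * (nb/2 - b1 * u/3 - b2 * v/3 + u^2/12 + u * v/24 + v^2/12)))"

definition "ks1 u v = u/3 + v/6"
definition "ks2 u v = u/6 + v/3"
definition "cc1 u v = (1 - u^2 * v) / (3 * (1 - u * v))"
definition "cc2 u v = (1 - u * v^2) / (3 * (1 - u * v))"
definition "ms1 u v = cc1 u v + cc2 u v / 2"
definition "ms2 u v = cc1 u v / 2 + cc2 u v"

lemma Dident:
  assumes q: "u * v \<noteq> 1"
  shows "Dv u v a1 a2 b1 b2 = 5/12 - Gf u v / 9 + 4/3 * (u * v) * Qf (a1 - ks1 u v) (a2 - ks2 u v)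
      + 4/3 * (1 - u * v) * Qf (b1 - ms1 u v) (b2 - ms2 u v)"
proof -
  define w where "w = 1 - u * v"
  have w: "w \<noteq> 0" using q by (simp add: w_def)
  define X where "X = 1 - u^2 * v"
  define Y where "Y = 1 - u * v^2"
  have c1: "cc1 u v = X / (3 * w)" and c2: "cc2 u v = Y / (3 * w)"
    by (simp_all add: cc1_def cc2_def X_def Y_def w_def)
  have QfD: "Qf (x1 - y1) (x2 - y2) - Qf y1 y2 = Qf x1 x2 - (2* y1 - y2) * x1 - (2* y2 - y1) * x2" for x1 x2 y1 y2
    by (simp add: Qf_def power2_eq_square algebra_simps)
  have Ta: "4/3 * (u * v) * (Qf (a1 - ks1 u v) (a2 - ks2 u v) - Qf (ks1 u v) (ks2 u v))
       = 4/3 * (u * v) * Qf a1 a2 - 2/3 * (u * v) * (u * a1 + v * a2)"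
    unfolding QfD by (simp add: ks1_def ks2_def algebra_simps)
  have m1: "w * (2 * ms1 u v - ms2 u v) = X / 2" and m2: "w * (2 * ms2 u v - ms1 u v) = Y / 2"
    using w by (simp_all add: ms1_def ms2_def c1 c2 field_simps)
  have Tb: "4/3 * w * (Qf (b1 - ms1 u v) (b2 - ms2 u v) - Qf (ms1 u v) (ms2 u v))
       = 4/3 * w * Qf b1 b2 - 2/3 * (X * b1 + Y * b2)"
  proof -
    have "4/3 * w * (Qf (b1 - ms1 u v) (b2 - ms2 u v) - Qf (ms1 u v) (ms2 u v))
       = 4/3 * w * Qf b1 b2 - 4/3 * (w * (2 * ms1 u v - ms2 u v)) * b1 - 4/3 * (w * (2 * ms2 u v - ms1 u v)) * b2"
      unfolding QfD by (simp add: algebra_simps)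
    thus ?thesis unfolding m1 m2 by (simp add: field_simps)
  qed
  have Nm: "4/3 * Qf (ms1 u v) (ms2 u v) = (cc1 u v)^2 + cc1 u v * cc2 u v + (cc2 u v)^2"
    by (simp add: Qf_def ms1_def ms2_def power2_eq_square algebra_simps)
  have Nk: "4/3 * Qf (ks1 u v) (ks2 u v) = (u^2 + u* v + v^2) / 9"
    by (simp add: Qf_def ks1_def ks2_def power2_eq_square algebra_simps)
  have K: "4/3 * (u * v) * Qf (ks1 u v) (ks2 u v) + 4/3 * w * Qf (ms1 u v) (ms2 u v) = Gf u v / 9"
  proof -
    have "4/3 * (u * v) * Qf (ks1 u v) (ks2 u v) + 4/3 * w * Qf (ms1 u v) (ms2 u v)
       = (u * v) * (4/3 * Qf (ks1 u v) (ks2 u v)) + w * (4/3 * Qf (ms1 u v) (ms2 u v))"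
      by (simp add: algebra_simps)
    also have "\<dots> = (u * v) * ((u^2 + u* v + v^2) / 9) + w * ((cc1 u v)^2 + cc1 u v * cc2 u v + (cc2 u v)^2)"
      unfolding Nm Nk ..
    also have "\<dots> = (u * v * (u^2 + u* v + v^2) * w + (X^2 + X * Y + Y^2)) / (9 * w)"
      using w unfolding c1 c2 by (simp add: field_simps power2_eq_square)
    also have "u * v * (u^2 + u* v + v^2) * w + (X^2 + X * Y + Y^2) = u* v * (u+v)^2 - 3 * (u* v) * (u+v) + 3 - (u* v)^2"
      by (simp add: w_def X_def Y_def power2_eq_square algebra_simps)
    also have "(u* v * (u+v)^2 - 3 * (u* v) * (u+v) + 3 - (u* v)^2) / (9 * w) = Gf u v / 9"
      by (simp add: Gf_def w_def)
    finally show ?thesis .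
  qed
  have "Dv u v a1 a2 b1 b2 = 5/12 + (4/3 * (u * v) * Qf a1 a2 - 2/3 * (u * v) * (u * a1 + v * a2))
       + (4/3 * w * Qf b1 b2 - 2/3 * (X * b1 + Y * b2))"
    unfolding Dv_def Let_def w_def X_def Y_def by (simp add: algebra_simps power2_eq_square) (simp add: field_simps)
  also have "\<dots> = 5/12 + 4/3 * (u * v) * (Qf (a1 - ks1 u v) (a2 - ks2 u v) - Qf (ks1 u v) (ks2 u v))
       + 4/3 * w * (Qf (b1 - ms1 u v) (b2 - ms2 u v) - Qf (ms1 u v) (ms2 u v))"
    unfolding Ta Tb ..
  also have "\<dots> = 5/12 - (4/3 * (u * v) * Qf (ks1 u v) (ks2 u v) + 4/3 * w * Qf (ms1 u v) (ms2 u v))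
       + 4/3 * (u * v) * Qf (a1 - ks1 u v) (a2 - ks2 u v) + 4/3 * w * Qf (b1 - ms1 u v) (b2 - ms2 u v)"
    by (simp add: algebra_simps)
  also have "\<dots> = 5/12 - Gf u v / 9 + 4/3 * (u * v) * Qf (a1 - ks1 u v) (a2 - ks2 u v)
      + 4/3 * (1 - u * v) * Qf (b1 - ms1 u v) (b2 - ms2 u v)"
    unfolding K by (simp add: w_def)
  finally show ?thesis .
qed


definition Vs :: real where "Vs = 5/12 - Gs/9"

lemma Vs_small: "Vs < 1/12" using sg_bounds by (simp add: Vs_def Gs_def)

lemma sg_facts: "sg^3 = 2 * sg - 1" "1 - sg^2 = sg" "1 - sg = sg^2" "0 < sg" "sg < 1"
proof -
  have e: "sg^2 = 1 - sg" by (rule sg_sq)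
  show "sg^3 = 2 * sg - 1"
  proof -
    have "sg^3 = sg * sg^2" by (simp add: power3_eq_cube power2_eq_square)
    also have "\<dots> = sg * (1 - sg)" by (simp only: e)
    also have "\<dots> = sg - sg^2" by (simp add: power2_eq_square algebra_simps)
    finally show ?thesis using e by linarith
  qed
  show "1 - sg^2 = sg" "1 - sg = sg^2" using e by simp_all
  show "0 < sg" "sg < 1" using sg_bounds by simp_all
qed

lemma cc_sg: "cc1 sg sg = 2 * sg / 3" "cc2 sg sg = 2 * sg / 3"
proof -
  have "1 - sg^2 * sg = 2 * sg^2" using sg_facts by (simp add: power3_eq_cube power2_eq_square algebra_simps)
  moreover have "1 - sg * sg = sg" using sg_facts by (simp add: power2_eq_square)
  ultimately have "cc1 sg sg = 2 * sg^2 / (3 * sg)" by (simp add: cc1_def)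
  thus "cc1 sg sg = 2 * sg / 3" using sg_facts by (simp add: power2_eq_square)
  thus "cc2 sg sg = 2 * sg / 3" by (simp add: cc1_def cc2_def power2_eq_square mult.commute)
qed

lemma ms_sg: "ms1 sg sg = sg" "ms2 sg sg = sg" by (simp_all add: ms1_def ms2_def cc_sg)

lemma Gf_sg: "Gf sg sg = Gs"
proof -
  have s4: "sg^4 = 2 - 3 * sg"
  proof -
    have "sg^4 = (sg^2)^2" by simp
    also have "\<dots> = (1 - sg)^2" using sg_sq by simp
    also have "\<dots> = 1 - 2* sg + sg^2" by (simp add: power2_eq_square algebra_simps)
    finally show ?thesis using sg_sq by simp
  qed
  have "Gf sg sg = (3 * sg^4 - 6 * sg^3 + 3) / (1 - sg^2)"
    by (simp add: Gf_def power2_eq_square power3_eq_cube power4_eq_xxxx algebra_simps)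
  also have "\<dots> = (15 - 21 * sg) / sg" using s4 sg_facts by simp
  also have "\<dots> = 15 * sg - 6"
  proof -
    have "15 - 21 * sg = (15 * sg - 6) * sg" using sg_sq by (simp add: power2_eq_square algebra_simps)
    thus ?thesis using sg_facts by simp
  qed
  finally show ?thesis by (simp add: Gs_def)
qed

lemma Dv_one: "Dv 1 1 a1 a2 b1 b2 = 1/12 + 4/3 * Qf (a1 - 1/2) (a2 - 1/2)"
  by (simp add: Dv_def Qf_def power2_eq_square algebra_simps) (simp add: field_simps)

lemma Dv_bound:
  assumes u: "0 < u" "u \<le> 1" and v: "0 < v" "v \<le> 1"
  shows "Vs \<le> Dv u v a1 a2 b1 b2"
    and "Dv u v a1 a2 b1 b2 = Vs \<Longrightarrow> u = sg \<and> v = sg \<and> a1 = sg/2 \<and> a2 = sg/2 \<and> b1 = sg \<and> b2 = sg"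
proof -
  have "Vs \<le> Dv u v a1 a2 b1 b2 \<and> (Dv u v a1 a2 b1 b2 = Vs \<longrightarrow> u = sg \<and> v = sg \<and> a1 = sg/2 \<and> a2 = sg/2 \<and> b1 = sg \<and> b2 = sg)"
  proof (cases "u * v = 1")
    case True
    have "u = 1"
    proof (rule ccontr)
      assume "u \<noteq> 1" hence "u < 1" using u by simp
      hence "u * v < 1 * v" using u v by (intro mult_strict_right_mono) auto
      hence "u * v < 1 * 1" using v by linarith
      thus False using True by simp
    qed
    moreover have "v = 1" using True \<open>u = 1\<close> by simp
    ultimately have "Dv u v a1 a2 b1 b2 = 1/12 + 4/3 * Qf (a1 - 1/2) (a2 - 1/2)" by (simp add: Dv_one)
    moreover have "0 \<le> Qf (a1 - 1/2) (a2 - 1/2)" by (rule Qf_nn)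
    ultimately show ?thesis using Vs_small by auto
  next
    case False
    have q1: "u * v < 1"
    proof -
      have "u * v \<le> 1 * 1" using u v by (intro mult_mono) auto
      thus ?thesis using False by simp
    qed
    note D = Dident[OF False, of a1 a2 b1 b2]
    have G: "Gf u v \<le> Gs" using key_ineq(1)[OF u v q1] .
    have n1: "0 \<le> 4/3 * (u * v) * Qf (a1 - ks1 u v) (a2 - ks2 u v)" using u v Qf_nn by simp
    have n2: "0 \<le> 4/3 * (1 - u * v) * Qf (b1 - ms1 u v) (b2 - ms2 u v)" using q1 Qf_nn by simp
    have "Vs \<le> Dv u v a1 a2 b1 b2" unfolding D Vs_def using G n1 n2 by simp
    moreover have "u = sg \<and> v = sg \<and> a1 = sg/2 \<and> a2 = sg/2 \<and> b1 = sg \<and> b2 = sg" if eq: "Dv u v a1 a2 b1 b2 = Vs"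
    proof -
      have z: "Gf u v = Gs" "4/3 * (u * v) * Qf (a1 - ks1 u v) (a2 - ks2 u v) = 0"
         "4/3 * (1 - u * v) * Qf (b1 - ms1 u v) (b2 - ms2 u v) = 0"
        using eq G n1 n2 unfolding D Vs_def by linarith+
      have uv: "u = sg \<and> v = sg" using key_ineq(2)[OF u v q1 z(1)] .
      have qa: "Qf (a1 - ks1 u v) (a2 - ks2 u v) = 0" using z(2) u v by simp
      have ha: "a1 = ks1 u v \<and> a2 = ks2 u v" using Qf_zero[OF qa] by simp
      have qb: "Qf (b1 - ms1 u v) (b2 - ms2 u v) = 0" using z(3) q1 by simp
      have hb: "b1 = ms1 u v \<and> b2 = ms2 u v" using Qf_zero[OF qb] by simp
      from ha hb show ?thesis using uv ms_sg by (simp add: ks1_def ks2_def)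
    qed
    ultimately show ?thesis by blast
  qed
  thus "Vs \<le> Dv u v a1 a2 b1 b2"
    and "Dv u v a1 a2 b1 b2 = Vs \<Longrightarrow> u = sg \<and> v = sg \<and> a1 = sg/2 \<and> a2 = sg/2 \<and> b1 = sg \<and> b2 = sg" by blast+
qed

lemma Dv_opt: "Dv sg sg (sg/2) (sg/2) sg sg = Vs"
proof -
  have ne: "sg * sg \<noteq> 1" using sg_facts by (simp add: power2_eq_square)
  show ?thesis unfolding Dident[OF ne] Gf_sg Vs_def ms_sg by (simp add: Qf_def ks1_def ks2_def)
qed


context lab begin

lemma nrm_gram: "nrm a = 4/3 * Qf (al1 a) (al2 a)"
  using gram[of "fst a - fst P0" "snd a - snd P0"] by (simp add: nrm_def al1_def al2_def Qf_def)

lemma pt_eq: assumes "al1 x = al1 y" "al2 x = al2 y" shows "x = y"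
proof -
  have "(fst x - fst y)^2 + (snd x - snd y)^2 = 4/3 * Qf (al1 x - al1 y) (al2 x - al2 y)"
    using gram[of "fst x - fst y" "snd x - snd y"] by (simp add: al1_def al2_def Qf_def algebra_simps)
  also have "\<dots> = 0" using assms by (simp add: Qf_def)
  finally have "(fst x - fst y)^2 + (snd x - snd y)^2 = 0" .
  hence "fst x = fst y" "snd x = snd y" by (simp_all add: sum_power2_eq_zero_iff)
  thus ?thesis by (simp add: prod_eq_iff)
qed

lemma Dval_eq: "2 * (IR a u v + ID b - IR b u v) = Dv u v (al1 a) (al2 a) (al1 b) (al2 b)"
  unfolding IR_def ID_def Dv_def Let_def nrm_gram by simp

lemma ID_bound: "2 * ID a = 1/12 + 4/3 * Qf (al1 a - 1/2) (al2 a - 1/2)"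
  unfolding ID_def nrm_gram by (simp add: Qf_def power2_eq_square algebra_simps) (simp add: field_simps)

lemma ID_gt: "Vs < 2 * ID a"
  unfolding ID_bound using Qf_nn[of "al1 a - 1/2" "al2 a - 1/2"] Vs_small by simp

definition "qa = (fst P0 + sg/3 * (e1x + e2x), snd P0 + sg/3 * (e1y + e2y))"
definition "qb = (fst P0 + 2 * sg/3 * (e1x + e2x), snd P0 + 2 * sg/3 * (e1y + e2y))"

lemma al_q: "al1 qa = sg/2" "al2 qa = sg/2" "al1 qb = sg" "al2 qb = sg"
proof -
  have A: "e1x * (e1x + e2x) + e1y * (e1y + e2y) = 3/2"
    using G11 G12 by (simp add: power2_eq_square algebra_simps)
  have B: "e2x * (e1x + e2x) + e2y * (e1y + e2y) = 3/2"
    using G22 G12 by (simp add: power2_eq_square algebra_simps)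
  have "al1 qa = sg/3 * (e1x * (e1x + e2x) + e1y * (e1y + e2y))" by (simp add: al1_def qa_def field_simps)
  thus "al1 qa = sg/2" unfolding A by simp
  have "al2 qa = sg/3 * (e2x * (e1x + e2x) + e2y * (e1y + e2y))" by (simp add: al2_def qa_def field_simps)
  thus "al2 qa = sg/2" unfolding B by simp
  have "al1 qb = 2 * sg/3 * (e1x * (e1x + e2x) + e1y * (e1y + e2y))" by (simp add: al1_def qb_def field_simps)
  thus "al1 qb = sg" unfolding A by simp
  have "al2 qb = 2 * sg/3 * (e2x * (e1x + e2x) + e2y * (e1y + e2y))" by (simp add: al2_def qb_def field_simps)
  thus "al2 qb = sg" unfolding B by simp
qed

lemma ps_vals: "ps a b P0 = nrm b - nrm a" "ps a b P1 = nrm b - nrm a - 2 * (al1 b - al1 a)"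
     "ps a b P2 = nrm b - nrm a - 2 * (al2 b - al2 a)"
proof -
  have pw: "ps a b (Phi w) = nrm b - nrm a - 2 * fst w * (al1 b - al1 a) - 2 * snd w * (al2 b - al2 a)" for w
    unfolding ps_def dist_Phi by (simp add: algebra_simps)
  from pw[of "(0,0)"] pw[of "(1,0)"] pw[of "(0,1)"]
  show "ps a b P0 = nrm b - nrm a" "ps a b P1 = nrm b - nrm a - 2 * (al1 b - al1 a)"
     "ps a b P2 = nrm b - nrm a - 2 * (al2 b - al2 a)"
    unfolding Phi00 Phi10 Phi01 by simp_all
qed

lemma lower:
  assumes "ps a b P0 > 0" "ps a b P1 \<le> 0" "ps a b P2 \<le> 0"
  shows "\<exists>d. distortion P_tri {a, b} = ennreal d \<and> Vs \<le> d \<and> (d = Vs \<longrightarrow> a = qa \<and> b = qb)"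
proof -
  define u where "u = ps a b P0 / (ps a b P0 - ps a b P1)"
  define v where "v = ps a b P0 / (ps a b P0 - ps a b P2)"
  note sf = split_formula[OF assms, folded u_def v_def]
  let ?d = "Dv u v (al1 a) (al2 a) (al1 b) (al2 b)"
  have "distortion P_tri {a, b} = ennreal ?d" using sf(1) Dval_eq by simp
  moreover have "Vs \<le> ?d" using Dv_bound(1) sf(2-5) by blast
  moreover have "a = qa \<and> b = qb" if "?d = Vs"
  proof -
    have h: "al1 a = sg/2" "al2 a = sg/2" "al1 b = sg" "al2 b = sg"
      using Dv_bound(2)[OF sf(2-5) that] by auto
    show ?thesis using h al_q by (auto intro!: pt_eq)
  qed
  ultimately show ?thesis by blast
qed

lemma opt: "distortion P_tri {qa, qb} = ennreal Vs"
proof -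
  have nq: "nrm qa = sg^2/3" "nrm qb = 4 * sg^2/3"
    unfolding nrm_gram al_q by (simp_all add: Qf_def power2_eq_square)
  have p0: "ps qa qb P0 = sg^2" and p1: "ps qa qb P1 = sg^2 - sg" and p2: "ps qa qb P2 = sg^2 - sg"
    unfolding ps_vals nq al_q by (simp_all add: algebra_simps)
  have s: "0 < sg" "sg < 1" using sg_facts by auto
  have h: "ps qa qb P0 > 0" "ps qa qb P1 \<le> 0" "ps qa qb P2 \<le> 0"
    unfolding p0 p1 p2 using s by (simp_all add: power2_eq_square mult_le_cancel_right1 less_imp_le)
  have uv: "ps qa qb P0 / (ps qa qb P0 - ps qa qb P1) = sg" "ps qa qb P0 / (ps qa qb P0 - ps qa qb P2) = sg"
    unfolding p0 p1 p2 using s by (simp_all add: power2_eq_square)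
  have "distortion P_tri {qa, qb} = ennreal (Dv sg sg (al1 qa) (al2 qa) (al1 qb) (al2 qb))"
    using split_formula(1)[OF h] Dval_eq unfolding uv by simp
  thus ?thesis unfolding al_q Dv_opt .
qed

lemma qa_ne_qb: "qa \<noteq> qb"
proof
  assume "qa = qb"
  hence "al1 qa = al1 qb" by simp
  thus False using al_q sg_facts by simp
qed

end


lemma tri_box: "x \<in> tri \<Longrightarrow> 0 \<le> fst x \<and> fst x \<le> 1 \<and> 0 \<le> snd x \<and> snd x \<le> 1"
proof -
  assume "x \<in> tri"
  then obtain u v w where h: "0 \<le> u" "0 \<le> v" "0 \<le> w" "u + v + w = 1"
     "x = u *\<^sub>R (0,0) + v *\<^sub>R (1,0) + w *\<^sub>R (1/2, sqrt 3 / 2)"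
    unfolding tri_def convex_hull_3 by auto
  have s3: "sqrt 3 \<le> 2"
  proof -
    have "sqrt 3 \<le> sqrt (2^2)" by (subst real_sqrt_le_iff) simp
    thus ?thesis by simp
  qed
  have "w * sqrt 3 / 2 \<le> w" using h(3) s3 by (simp add: mult_left_mono)
  thus ?thesis using h by auto
qed

lemma ennreal_split: "ennreal a = ennreal b + X \<Longrightarrow> 0 \<le> b \<Longrightarrow> X = ennreal (a - b)"
proof -
  assume e: "ennreal a = ennreal b + X" and b: "0 \<le> b"
  have "X = ennreal a - ennreal b" unfolding e by simp
  thus ?thesis using b by (simp add: ennreal_minus)
qed

context lab begin

lemma tri_Phi: "tri = Phi ` Dl"
proof
  show "Phi ` Dl \<subseteq> tri" using Phi_tri by auto
  show "tri \<subseteq> Phi ` Dl"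
  proof
    fix x assume "x \<in> tri"
    then obtain u v w where uvw: "0 \<le> u" "0 \<le> v" "0 \<le> w" "u + v + w = 1" "x = u *\<^sub>R P0 + v *\<^sub>R P1 + w *\<^sub>R P2"
      unfolding hull convex_hull_3 by auto
    have "x = Phi (v, w)" using uvw by (simp add: Phi_conv)
    moreover have "(v, w) \<in> Dl" using uvw by (auto simp: Dl_def)
    ultimately show "x \<in> Phi ` Dl" by blast
  qed
qed

definition sm :: "real \<Rightarrow> (real \<times> real) set" where
  "sm t = (\<lambda>x. P0 + t *\<^sub>R (x - P0)) ` tri"

lemma hom_Phi: "P0 + t *\<^sub>R (Phi z - P0) = Phi (t * fst z, t * snd z)"
  by (simp add: Phi_def prod_eq_iff algebra_simps)

lemma sm_Phi: "sm t = (\<lambda>z. Phi (t * fst z, t * snd z)) ` Dl"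
  unfolding sm_def tri_Phi image_image hom_Phi ..

lemma sm_iff: assumes t: "0 < t" shows "Phi w \<in> sm t \<longleftrightarrow> (fst w / t, snd w / t) \<in> Dl"
proof
  assume "Phi w \<in> sm t"
  then obtain z where z: "z \<in> Dl" "Phi w = Phi (t * fst z, t * snd z)" unfolding sm_Phi by auto
  hence "w = (t * fst z, t * snd z)" using Phi_inj by blast
  thus "(fst w / t, snd w / t) \<in> Dl" using z t by simp
next
  assume "(fst w / t, snd w / t) \<in> Dl"
  moreover have "Phi w = Phi (t * fst (fst w / t, snd w / t), t * snd (fst w / t, snd w / t))" using t by simp
  ultimately show "Phi w \<in> sm t" unfolding sm_Phi by blast
qed

lemma sm_sub: assumes "0 \<le> t" "t \<le> 1" shows "sm t \<subseteq> tri"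
proof
  fix y assume "y \<in> sm t"
  then obtain x where x: "x \<in> tri" "y = P0 + t *\<^sub>R (x - P0)" unfolding sm_def by auto
  have "y = (1 - t) *\<^sub>R P0 + t *\<^sub>R x" using x by (simp add: algebra_simps)
  moreover have "P0 \<in> tri" unfolding hull by (intro hull_inc) simp
  moreover have "convex tri" unfolding hull by (rule convex_convex_hull)
  ultimately show "y \<in> tri" using x assms by (simp add: convex_def)
qed

lemma sm_one: "sm 1 = tri" by (simp add: sm_def)

lemma sm_meas[measurable]: "sm t \<in> sets borel"
proof -
  have "compact (sm t)" unfolding sm_def hull
    by (intro compact_continuous_image compact_convex_hull finite_imp_compact continuous_intros) simp
  thus ?thesis by (intro borel_closed compact_imp_closed)
qed

lemma tri_meas[measurable]: "tri \<in> sets borel" using tri_closed by (rule borel_closed)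

lemma cv_lb:
  fixes f :: "real \<times> real \<Rightarrow> ennreal"
  assumes [measurable]: "f \<in> borel_measurable borel"
  shows "(\<integral>\<^sup>+x. f x \<partial>lborel) = ennreal (sqrt 3 / 2) * (\<integral>\<^sup>+z. f (Phi z) \<partial>lborel)"
proof -
  have "e1x \<noteq> 0" using nz by (simp add: e1x_def)
  thus ?thesis
    using cv_affine[where f=f and a=e1x and b=e2x and c=e1y and d=e2y and px="fst P0" and py="snd P0"] det_nz det_abs
    by (simp add: Phi_def)
qed

lemma int_sm:
  fixes f :: "real \<times> real \<Rightarrow> real"
  assumes t: "0 < t" and fc: "continuous_on UNIV f"
  shows "(\<integral>\<^sup>+x. indicator (sm t) x * ennreal (f x) \<partial>lborel)
     = ennreal (sqrt 3 / 2 * t^2) * (\<integral>\<^sup>+z. indicator Dl z * ennreal (f (Phi (t * fst z, t * snd z))) \<partial>lborel)"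
proof -
  have [measurable]: "f \<in> borel_measurable borel" using fc by (rule borel_measurable_continuous_onI)
  have "(\<integral>\<^sup>+x. indicator (sm t) x * ennreal (f x) \<partial>lborel)
     = ennreal (sqrt 3 / 2) * (\<integral>\<^sup>+w. indicator (sm t) (Phi w) * ennreal (f (Phi w)) \<partial>lborel)"
    by (rule cv_lb) measurable
  also have "(\<integral>\<^sup>+w. indicator (sm t) (Phi w) * ennreal (f (Phi w)) \<partial>lborel)
     = (\<integral>\<^sup>+w. indicator Dl (fst w / t, snd w / t) * ennreal (f (Phi w)) \<partial>lborel)"
    using sm_iff[OF t] by (intro nn_integral_cong) (simp add: indicator_def)
  also have "\<dots> = ennreal \<bar>t * t - 0 * 0\<bar> * (\<integral>\<^sup>+z. indicator Dl (fst (0 + t * fst z + 0 * snd z, 0 + 0 * fst z + t * snd z) / t,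
         snd (0 + t * fst z + 0 * snd z, 0 + 0 * fst z + t * snd z) / t)
       * ennreal (f (Phi (0 + t * fst z + 0 * snd z, 0 + 0 * fst z + t * snd z))) \<partial>lborel)"
  proof (rule cv_affine)
    have g: "(\<lambda>w::real\<times>real. (fst w / t, snd w / t)) \<in> borel_measurable borel"
      by (intro borel_measurable_continuous_onI continuous_intros) (use t in auto)
    have "(\<lambda>w. indicator Dl (fst w / t, snd w / t) :: ennreal) \<in> borel_measurable borel"
      using measurable_compose[OF g borel_measurable_indicator[OF Dl_meas]] by (simp add: o_def)
    thus "(\<lambda>w. indicator Dl (fst w / t, snd w / t) * ennreal (f (Phi w))) \<in> borel_measurable borel"
      by measurable
  qed (use t in auto)
  also have "\<dots> = ennreal (t^2) * (\<integral>\<^sup>+z. indicator Dl z * ennreal (f (Phi (t * fst z, t * snd z))) \<partial>lborel)"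
    using t by (simp add: power2_eq_square)
  finally have "(\<integral>\<^sup>+x. indicator (sm t) x * ennreal (f x) \<partial>lborel) = (ennreal (sqrt 3 / 2) * ennreal (t^2)) *
     (\<integral>\<^sup>+z. indicator Dl z * ennreal (f (Phi (t * fst z, t * snd z))) \<partial>lborel)"
    by (simp add: mult.assoc)
  also have "ennreal (sqrt 3 / 2) * ennreal (t^2) = ennreal (sqrt 3 / 2 * t^2)"
    by (simp add: ennreal_mult'[symmetric])
  finally show ?thesis .
qed

end


lemma tri_closed_gl: "tri \<in> sets borel"
  unfolding tri_def by (intro borel_closed compact_imp_closed compact_convex_hull finite_imp_compact) simp

lemma norm_tri: "x \<in> tri \<Longrightarrow> norm x \<le> 2"
proof -
  assume "x \<in> tri"
  hence b: "0 \<le> fst x \<and> fst x \<le> 1 \<and> 0 \<le> snd x \<and> snd x \<le> 1" by (rule tri_box)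
  have "norm x = norm (fst x, snd x)" by simp
  also have "\<dots> \<le> norm (fst x) + norm (snd x)" by (rule norm_Pair_le)
  also have "\<dots> \<le> 2" using b by simp
  finally show ?thesis .
qed

lemma bochner_S:
  assumes S: "S \<subseteq> tri" "S \<in> sets borel" and fin: "emeasure lborel tri < \<infinity>"
    and m: "(\<integral>\<^sup>+x. indicator S x \<partial>lborel) = ennreal m" "0 \<le> m"
    and a: "(\<integral>\<^sup>+x. indicator S x * ennreal (fst x) \<partial>lborel) = ennreal a" "0 \<le> a"
    and b: "(\<integral>\<^sup>+x. indicator S x * ennreal (snd x) \<partial>lborel) = ennreal b" "0 \<le> b"
  shows "measure lborel S = m" "(LINT x:S|lborel. x) = (a, b)"
proof -
  have [measurable]: "S \<in> sets borel" "tri \<in> sets borel" using S(2) tri_closed_gl by auto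
  show "measure lborel S = m" using m S(2) by (simp add: measure_def)
  have i1: "integrable lborel (\<lambda>x. 2 * indicator tri x :: real)"
    using fin by (intro integrable_mult_right integrable_real_indicator) auto
  have m1: "(\<lambda>x. indicator S x *\<^sub>R x) \<in> borel_measurable lborel" by measurable
  have ae: "AE x in lborel. norm (indicator S x *\<^sub>R x) \<le> norm (2 * indicator tri x :: real)"
    using S(1) norm_tri by (auto simp: indicator_def)
  have int: "integrable lborel (\<lambda>x. indicator S x *\<^sub>R x)"
    using Bochner_Integration.integrable_bound[OF i1 m1 ae] .
  have comp: "(LINT x:S|lborel. f x) = enn2real (\<integral>\<^sup>+x. indicator S x * ennreal (f x) \<partial>lborel)"
    if f: "f \<in> borel_measurable borel" "\<And>x. x \<in> tri \<Longrightarrow> 0 \<le> f x" for f :: "real \<times> real \<Rightarrow> real"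
  proof -
    have [measurable]: "f \<in> borel_measurable borel" by (rule f)
    have "(LINT x:S|lborel. f x) = enn2real (\<integral>\<^sup>+x. ennreal (indicator S x * f x) \<partial>lborel)"
      unfolding set_lebesgue_integral_def
      by (subst integral_eq_nn_integral) (use S(1) f(2) in \<open>auto simp: indicator_def intro!: AE_I2\<close>)
    also have "(\<integral>\<^sup>+x. ennreal (indicator S x * f x) \<partial>lborel) = (\<integral>\<^sup>+x. indicator S x * ennreal (f x) \<partial>lborel)"
      by (intro nn_integral_cong) (auto simp: indicator_def)
    finally show ?thesis .
  qed
  have fm: "(fst :: real \<times> real \<Rightarrow> real) \<in> borel_measurable borel"
    by (intro borel_measurable_continuous_onI continuous_intros)
  have sm': "(snd :: real \<times> real \<Rightarrow> real) \<in> borel_measurable borel"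
    by (intro borel_measurable_continuous_onI continuous_intros)
  have "fst (LINT x:S|lborel. x) = (LINT x:S|lborel. fst x)"
    using integral_fst[OF int] unfolding set_lebesgue_integral_def by simp
  also have "\<dots> = a" using comp[of fst] a tri_box fm by auto
  finally have "fst (LINT x:S|lborel. x) = a" .
  moreover have "snd (LINT x:S|lborel. x) = (LINT x:S|lborel. snd x)"
    using integral_snd[OF int] unfolding set_lebesgue_integral_def by simp
  moreover have "(LINT x:S|lborel. snd x) = b" using comp[of snd] b tri_box sm' by auto
  ultimately show "(LINT x:S|lborel. x) = (a, b)" by (simp add: prod_eq_iff)
qed


context lab begin

lemma int_sm_poly:
  fixes f :: "real \<times> real \<Rightarrow> real"
  assumes t: "0 < t" "t \<le> 1" and fc: "continuous_on UNIV f" and fn: "\<And>x. x \<in> tri \<Longrightarrow> 0 \<le> f x"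
    and fe: "\<And>x y. f (Phi (t * x, t * y)) = kk + kx * x + ky * y"
  shows "(\<integral>\<^sup>+x. indicator (sm t) x * ennreal (f x) \<partial>lborel) = ennreal (sqrt 3 / 2 * t^2 * (kk/2 + kx/6 + ky/6))
     \<and> 0 \<le> kk/2 + kx/6 + ky/6"
proof -
  have P: "(\<integral>\<^sup>+z. indicator Dl z * ennreal (f (Phi (t * fst z, t * snd z))) \<partial>lborel)
     = ennreal (kk/2 + kx/6 + ky/6 + 0/12 + 0/24 + 0/12) \<and> 0 \<le> kk/2 + kx/6 + ky/6 + 0/12 + 0/24 + 0/12"
  proof (rule int_poly_Dl)
    show "0 \<le> f (Phi (t * fst z, t * snd z))" if "z \<in> Dl" for z
    proof -
      have "Phi (t * fst z, t * snd z) \<in> sm t" unfolding sm_Phi using that by blast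
      moreover have "sm t \<subseteq> tri" using sm_sub[of t] t by simp
      ultimately have "Phi (t * fst z, t * snd z) \<in> tri" by blast
      thus ?thesis by (rule fn)
    qed
    show "f (Phi (t * fst (x, y), t * snd (x, y))) = kk + kx * x + ky * y + 0 * x^2 + 0 * x * y + 0 * y^2" for x y
      using fe by simp
  qed
  have "(\<integral>\<^sup>+x. indicator (sm t) x * ennreal (f x) \<partial>lborel)
     = ennreal (sqrt 3 / 2 * t^2) * ennreal (kk/2 + kx/6 + ky/6)"
    using int_sm[OF t(1) fc] P by simp
  also have "\<dots> = ennreal (sqrt 3 / 2 * t^2 * (kk/2 + kx/6 + ky/6))"
    by (simp add: ennreal_mult'[symmetric])
  finally show ?thesis using P by simp
qed

lemma int_trap:
  fixes f :: "real \<times> real \<Rightarrow> real"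
  assumes t: "0 < t" "t \<le> 1" and fc: "continuous_on UNIV f"
    and A: "(\<integral>\<^sup>+x. indicator tri x * ennreal (f x) \<partial>lborel) = ennreal A" "0 \<le> A"
    and B: "(\<integral>\<^sup>+x. indicator (sm t) x * ennreal (f x) \<partial>lborel) = ennreal B" "0 \<le> B"
  shows "(\<integral>\<^sup>+x. indicator (tri - sm t) x * ennreal (f x) \<partial>lborel) = ennreal (A - B) \<and> B \<le> A"
proof -
  have [measurable]: "f \<in> borel_measurable borel" using fc by (rule borel_measurable_continuous_onI)
  have sub: "sm t \<subseteq> tri" using sm_sub t by auto
  have "ennreal A = (\<integral>\<^sup>+x. indicator (sm t) x * ennreal (f x) + indicator (tri - sm t) x * ennreal (f x) \<partial>lborel)"
    unfolding A(1)[symmetric] using sub by (intro nn_integral_cong) (auto simp: indicator_def)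
  also have "\<dots> = ennreal B + (\<integral>\<^sup>+x. indicator (tri - sm t) x * ennreal (f x) \<partial>lborel)"
    by (subst nn_integral_add) (auto simp: B)
  finally have e: "ennreal A = ennreal B + (\<integral>\<^sup>+x. indicator (tri - sm t) x * ennreal (f x) \<partial>lborel)" .
  have "ennreal B \<le> ennreal A" unfolding e by simp
  hence "B \<le> A" using A(2) by (simp add: ennreal_le_iff)
  thus ?thesis using ennreal_split[OF e B(2)] by simp
qed

lemma centroid_sm:
  assumes t: "0 < t" "t < 1"
  shows "measure lborel (sm t) = sqrt 3 / 4 * t^2"
    and "measure lborel (tri - sm t) = sqrt 3 / 4 * (1 - t^2)"
    and "centroid (sm t) = (fst P0 + t * (e1x + e2x) / 3, snd P0 + t * (e1y + e2y) / 3)"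
    and "centroid (tri - sm t) = (fst P0 + (1 - t^3) / (3 * (1 - t^2)) * (e1x + e2x),
                                   snd P0 + (1 - t^3) / (3 * (1 - t^2)) * (e1y + e2y))"
proof -
  have t1: "0 < (1::real)" "(1::real) \<le> 1" by simp_all
  have tt: "0 < t" "t \<le> 1" using t by simp_all
  have c1: "continuous_on UNIV (\<lambda>x::real\<times>real. 1::real)" by simp
  have cf: "continuous_on UNIV (fst :: real\<times>real \<Rightarrow> real)" by (intro continuous_intros)
  have cs: "continuous_on UNIV (snd :: real\<times>real \<Rightarrow> real)" by (intro continuous_intros)
  have fe: "fst (Phi (s * x, s * y)) = fst P0 + (s * e1x) * x + (s * e2x) * y" for s x y
    by (simp add: Phi_def algebra_simps)
  have se: "snd (Phi (s * x, s * y)) = snd P0 + (s * e1y) * x + (s * e2y) * y" for s x y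
    by (simp add: Phi_def algebra_simps)
  have fnf: "\<And>x. x \<in> tri \<Longrightarrow> 0 \<le> fst x" and fns: "\<And>x. x \<in> tri \<Longrightarrow> 0 \<le> snd x"
    and fn1: "\<And>x. x \<in> tri \<Longrightarrow> (0::real) \<le> 1" using tri_box by auto
  have oe: "(\<lambda>x. 1::real) (Phi (s * x, s * y)) = 1 + 0 * x + 0 * y" for s x y by simp
  have M1: "(\<integral>\<^sup>+x. indicator tri x * ennreal 1 \<partial>lborel) = ennreal (sqrt 3 / 2 * 1^2 * (1/2 + 0/6 + 0/6))"
    using int_sm_poly[where f="\<lambda>x. 1" and kk=1 and kx=0 and ky=0, OF t1 c1 fn1 oe] by (simp add: sm_one)
  have Mt: "(\<integral>\<^sup>+x. indicator (sm t) x * ennreal 1 \<partial>lborel) = ennreal (sqrt 3 / 2 * t^2 * (1/2 + 0/6 + 0/6))"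
    using int_sm_poly[where f="\<lambda>x. 1" and kk=1 and kx=0 and ky=0, OF tt c1 fn1 oe] by simp
  have F1: "(\<integral>\<^sup>+x. indicator tri x * ennreal (fst x) \<partial>lborel) = ennreal (sqrt 3 / 2 * 1^2 * (fst P0/2 + (1 * e1x)/6 + (1 * e2x)/6))"
    and F1n: "0 \<le> fst P0/2 + (1 * e1x)/6 + (1 * e2x)/6"
    using int_sm_poly[where f=fst and kk="fst P0" and kx="1 * e1x" and ky="1 * e2x", OF t1 cf fnf fe[of 1]] by (auto simp: sm_one)
  have Ft: "(\<integral>\<^sup>+x. indicator (sm t) x * ennreal (fst x) \<partial>lborel) = ennreal (sqrt 3 / 2 * t^2 * (fst P0/2 + (t * e1x)/6 + (t * e2x)/6))"
    and Ftn: "0 \<le> fst P0/2 + (t * e1x)/6 + (t * e2x)/6"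
    using int_sm_poly[where f=fst and kk="fst P0" and kx="t * e1x" and ky="t * e2x", OF tt cf fnf fe[of t]] by auto
  have S1: "(\<integral>\<^sup>+x. indicator tri x * ennreal (snd x) \<partial>lborel) = ennreal (sqrt 3 / 2 * 1^2 * (snd P0/2 + (1 * e1y)/6 + (1 * e2y)/6))"
    and S1n: "0 \<le> snd P0/2 + (1 * e1y)/6 + (1 * e2y)/6"
    using int_sm_poly[where f=snd and kk="snd P0" and kx="1 * e1y" and ky="1 * e2y", OF t1 cs fns se[of 1]] by (auto simp: sm_one)
  have St: "(\<integral>\<^sup>+x. indicator (sm t) x * ennreal (snd x) \<partial>lborel) = ennreal (sqrt 3 / 2 * t^2 * (snd P0/2 + (t * e1y)/6 + (t * e2y)/6))"
    and Stn: "0 \<le> snd P0/2 + (t * e1y)/6 + (t * e2y)/6"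
    using int_sm_poly[where f=snd and kk="snd P0" and kx="t * e1y" and ky="t * e2y", OF tt cs fns se[of t]] by auto
  have ind1: "(\<integral>\<^sup>+x. indicator S x \<partial>lborel) = (\<integral>\<^sup>+x. indicator S x * ennreal 1 \<partial>lborel)" for S :: "(real \<times> real) set"
    by simp
  have fin: "emeasure lborel tri < \<infinity>"
  proof -
    have "emeasure lborel tri = (\<integral>\<^sup>+x. indicator tri x * ennreal 1 \<partial>lborel)" by simp
    thus ?thesis unfolding M1 by simp
  qed
  have sub: "sm t \<subseteq> tri" using sm_sub t by simp
  have s3: "0 < sqrt 3" by simp
  note BS = bochner_S[OF sub sm_meas fin]
  have smr: "measure lborel (sm t) = sqrt 3 / 2 * t^2 * (1/2 + 0/6 + 0/6) \<and>
      (LINT x:sm t|lborel. x) = (sqrt 3 / 2 * t^2 * (fst P0/2 + (t * e1x)/6 + (t * e2x)/6),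
                                  sqrt 3 / 2 * t^2 * (snd P0/2 + (t * e1y)/6 + (t * e2y)/6))"
  proof -
    have Mt': "(\<integral>\<^sup>+x. indicator (sm t) x \<partial>lborel) = ennreal (sqrt 3 / 2 * t^2 * (1/2 + 0/6 + 0/6))"
      unfolding ind1 by (rule Mt)
    have mn: "0 \<le> sqrt 3 / 2 * t^2 * (1/2 + 0/6 + 0/6)" by simp
    show ?thesis using BS[OF Mt' mn Ft _ St] Ftn Stn by simp
  qed
  show m1: "measure lborel (sm t) = sqrt 3 / 4 * t^2" using smr by simp
  show "centroid (sm t) = (fst P0 + t * (e1x + e2x) / 3, snd P0 + t * (e1y + e2y) / 3)"
  proof -
    have L: "(LINT x:sm t|lborel. x) = (sqrt 3 / 2 * t^2 * (fst P0/2 + (t * e1x)/6 + (t * e2x)/6),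
                                  sqrt 3 / 2 * t^2 * (snd P0/2 + (t * e1y)/6 + (t * e2y)/6))" using smr by blast
    have "centroid (sm t) = (1 / (sqrt 3 / 4 * t^2)) *\<^sub>R (sqrt 3 / 2 * t^2 * (fst P0/2 + (t * e1x)/6 + (t * e2x)/6),
                                  sqrt 3 / 2 * t^2 * (snd P0/2 + (t * e1y)/6 + (t * e2y)/6))"
      unfolding centroid_def m1 L ..
    thus ?thesis using t s3 by (simp add: field_simps power2_eq_square)
  qed
  have TM: "(\<integral>\<^sup>+x. indicator (tri - sm t) x * ennreal 1 \<partial>lborel) = ennreal (sqrt 3 / 2 * 1^2 * (1/2 + 0/6 + 0/6) - sqrt 3 / 2 * t^2 * (1/2 + 0/6 + 0/6))
     \<and> sqrt 3 / 2 * t^2 * (1/2 + 0/6 + 0/6) \<le> sqrt 3 / 2 * 1^2 * (1/2 + 0/6 + 0/6)"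
    by (rule int_trap[OF tt c1 M1 _ Mt]) simp_all
  have TF: "(\<integral>\<^sup>+x. indicator (tri - sm t) x * ennreal (fst x) \<partial>lborel) = ennreal (sqrt 3 / 2 * 1^2 * (fst P0/2 + (1 * e1x)/6 + (1 * e2x)/6) - sqrt 3 / 2 * t^2 * (fst P0/2 + (t * e1x)/6 + (t * e2x)/6))
     \<and> sqrt 3 / 2 * t^2 * (fst P0/2 + (t * e1x)/6 + (t * e2x)/6) \<le> sqrt 3 / 2 * 1^2 * (fst P0/2 + (1 * e1x)/6 + (1 * e2x)/6)"
    by (rule int_trap[OF tt cf F1 _ Ft]) (use F1n Ftn in simp_all)
  have TS: "(\<integral>\<^sup>+x. indicator (tri - sm t) x * ennreal (snd x) \<partial>lborel) = ennreal (sqrt 3 / 2 * 1^2 * (snd P0/2 + (1 * e1y)/6 + (1 * e2y)/6) - sqrt 3 / 2 * t^2 * (snd P0/2 + (t * e1y)/6 + (t * e2y)/6))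
     \<and> sqrt 3 / 2 * t^2 * (snd P0/2 + (t * e1y)/6 + (t * e2y)/6) \<le> sqrt 3 / 2 * 1^2 * (snd P0/2 + (1 * e1y)/6 + (1 * e2y)/6)"
    by (rule int_trap[OF tt cs S1 _ St]) (use S1n Stn in simp_all)
  have subT: "tri - sm t \<subseteq> tri" by auto
  have trm: "tri - sm t \<in> sets borel" by measurable
  note BT = bochner_S[OF subT trm fin]
  have trr: "measure lborel (tri - sm t) = sqrt 3 / 2 * 1^2 * (1/2 + 0/6 + 0/6) - sqrt 3 / 2 * t^2 * (1/2 + 0/6 + 0/6) \<and>
      (LINT x:tri - sm t|lborel. x) = (sqrt 3 / 2 * 1^2 * (fst P0/2 + (1 * e1x)/6 + (1 * e2x)/6) - sqrt 3 / 2 * t^2 * (fst P0/2 + (t * e1x)/6 + (t * e2x)/6),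
          sqrt 3 / 2 * 1^2 * (snd P0/2 + (1 * e1y)/6 + (1 * e2y)/6) - sqrt 3 / 2 * t^2 * (snd P0/2 + (t * e1y)/6 + (t * e2y)/6))"
  proof -
    have Mt': "(\<integral>\<^sup>+x. indicator (tri - sm t) x \<partial>lborel) = ennreal (sqrt 3 / 2 * 1^2 * (1/2 + 0/6 + 0/6) - sqrt 3 / 2 * t^2 * (1/2 + 0/6 + 0/6))"
      unfolding ind1 by (rule TM[THEN conjunct1])
    have mn: "0 \<le> sqrt 3 / 2 * 1^2 * (1/2 + 0/6 + 0/6) - sqrt 3 / 2 * t^2 * (1/2 + 0/6 + 0/6)" using TM by simp
    have an: "0 \<le> sqrt 3 / 2 * 1^2 * (fst P0/2 + (1 * e1x)/6 + (1 * e2x)/6) - sqrt 3 / 2 * t^2 * (fst P0/2 + (t * e1x)/6 + (t * e2x)/6)"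
      using TF by simp
    have bn: "0 \<le> sqrt 3 / 2 * 1^2 * (snd P0/2 + (1 * e1y)/6 + (1 * e2y)/6) - sqrt 3 / 2 * t^2 * (snd P0/2 + (t * e1y)/6 + (t * e2y)/6)"
      using TS by simp
    show ?thesis using BT[OF Mt' mn TF[THEN conjunct1] an TS[THEN conjunct1] bn] by simp
  qed
  show m2: "measure lborel (tri - sm t) = sqrt 3 / 4 * (1 - t^2)" using trr by (simp add: algebra_simps)
  have t2: "1 - t^2 \<noteq> 0"
  proof -
    have "t * t < 1 * 1" using t by (intro mult_strict_mono) auto
    thus ?thesis by (simp add: power2_eq_square)
  qed
  show "centroid (tri - sm t) = (fst P0 + (1 - t^3) / (3 * (1 - t^2)) * (e1x + e2x),
                                   snd P0 + (1 - t^3) / (3 * (1 - t^2)) * (e1y + e2y))"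
  proof -
    have L: "(LINT x:tri - sm t|lborel. x) = (sqrt 3 / 2 * 1^2 * (fst P0/2 + (1 * e1x)/6 + (1 * e2x)/6) - sqrt 3 / 2 * t^2 * (fst P0/2 + (t * e1x)/6 + (t * e2x)/6),
          sqrt 3 / 2 * 1^2 * (snd P0/2 + (1 * e1y)/6 + (1 * e2y)/6) - sqrt 3 / 2 * t^2 * (snd P0/2 + (t * e1y)/6 + (t * e2y)/6))"
      using trr by blast
    show ?thesis unfolding centroid_def m2 L using t2 s3 by (simp add: field_simps) (simp add: eval_nat_numeral algebra_simps)
  qed
qed

end


lemma golden_sg: "golden = 1 + sg" by (simp add: golden_def sg_def field_simps)

context lab begin

lemma golden_opt:
  assumes t: "0 < t" "t < 1" and r: "measure lborel (tri - sm t) / measure lborel (sm t) = golden"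
  shows "centroid (tri - sm t) = qb" "centroid (sm t) = qa"
proof -
  have s3: "0 < sqrt 3" by simp
  have q: "(sqrt 3 / 4 * (1 - t^2)) / (sqrt 3 / 4 * t^2) = (1 - t^2) / t^2"
    using s3 by (simp add: mult_divide_mult_cancel_left)
  have "(1 - t^2) / t^2 = 1 + sg"
    using r unfolding centroid_sm(1,2)[OF t] golden_sg q .
  hence "1 - t^2 = (1 + sg) * t^2" using t by (simp add: field_simps)
  hence e: "t^2 * (2 + sg) = 1" by (simp add: algebra_simps)
  have "sg^2 * (2 + sg) = 1" using sg_facts by (simp add: power2_eq_square power3_eq_cube algebra_simps)
  hence "t^2 * (2 + sg) = sg^2 * (2 + sg)" using e by simp
  hence "t^2 = sg^2" using sg_facts by simp
  hence ts: "t = sg" using t sg_facts by (simp add: power2_eq_iff)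
  have c: "(1 - sg^3) / (3 * (1 - sg^2)) = 2 * sg / 3"
    using cc_sg(1) by (simp add: cc1_def power2_eq_square power3_eq_cube mult.assoc)
  show "centroid (tri - sm t) = qb" using centroid_sm(4)[OF t] unfolding ts c qb_def by (simp add: field_simps)
  show "centroid (sm t) = qa" using centroid_sm(3)[OF t] unfolding ts qa_def by (simp add: field_simps)
qed

end

lemma sqrt3_sq: "(sqrt 3 / 2)^2 = (3/4::real)" by (simp add: power_divide)

global_interpretation LA: lab "(0,0)" "(1,0)" "(1/2, sqrt 3 / 2)"
  by unfold_locales (simp_all add: tri_def sqrt3_sq power2_eq_square)

global_interpretation LB: lab "(1,0)" "(0,0)" "(1/2, sqrt 3 / 2)"
  by unfold_locales (simp_all add: tri_def insert_commute sqrt3_sq power2_eq_square)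

global_interpretation LC: lab "(1/2, sqrt 3 / 2)" "(0,0)" "(1,0)"
  by unfold_locales (simp_all add: tri_def insert_commute power2_eq_square)


definition "OA = {LA.qa, LA.qb}"
definition "OB = {LB.qa, LB.qb}"
definition "OC = {LC.qa, LC.qb}"

lemma fsts: "fst LA.qa = sg/2" "fst LA.qb = sg" "fst LB.qa = 1 - sg/2" "fst LB.qb = 1 - sg"
  "fst LC.qa = 1/2" "fst LC.qb = 1/2"
  by (simp_all add: LA.qa_def LA.qb_def LB.qa_def LB.qb_def LC.qa_def LC.qb_def
      LA.e1x_def LA.e2x_def LB.e1x_def LB.e2x_def LC.e1x_def LC.e2x_def)

lemma Vs_pos: "0 < Vs" using sg_bounds by (simp add: Vs_def Gs_def)

lemma sets_distinct: "OA \<noteq> OB" "OA \<noteq> OC" "OB \<noteq> OC"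
proof -
  have s: "0.618 < sg" "sg < 0.6181" by (rule sg_bounds)+
  show "OA \<noteq> OB"
  proof
    assume e: "OA = OB"
    have "LA.qa \<in> OA" by (simp add: OA_def)
    hence "LA.qa \<in> OB" using e by simp
    hence "fst LA.qa = fst LB.qa \<or> fst LA.qa = fst LB.qb" by (auto simp: OB_def)
    thus False unfolding fsts using s by auto
  qed
  show "OA \<noteq> OC"
  proof
    assume e: "OA = OC"
    have "LA.qa \<in> OA" by (simp add: OA_def)
    hence "LA.qa \<in> OC" using e by simp
    hence "fst LA.qa = fst LC.qa \<or> fst LA.qa = fst LC.qb" by (auto simp: OC_def)
    thus False unfolding fsts using s by auto
  qed
  show "OB \<noteq> OC"
  proof
    assume e: "OB = OC"
    have "LB.qa \<in> OB" by (simp add: OB_def)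
    hence "LB.qa \<in> OC" using e by simp
    hence "fst LB.qa = fst LC.qa \<or> fst LB.qa = fst LC.qb" by (auto simp: OC_def)
    thus False unfolding fsts using s by auto
  qed
qed

lemma adm_O: "admissible 2 OA" "admissible 2 OB" "admissible 2 OC"
  using LA.qa_ne_qb LB.qa_ne_qb LC.qa_ne_qb by (auto simp: admissible_def OA_def OB_def OC_def)

lemma dist_O: "distortion P_tri OA = ennreal Vs" "distortion P_tri OB = ennreal Vs" "distortion P_tri OC = ennreal Vs"
  unfolding OA_def OB_def OC_def by (rule LA.opt LB.opt LC.opt)+

lemma lower_all:
  assumes "admissible 2 \<alpha>"
  shows "\<exists>d. distortion P_tri \<alpha> = ennreal d \<and> Vs \<le> d \<and> (d = Vs \<longrightarrow> \<alpha> = OA \<or> \<alpha> = OB \<or> \<alpha> = OC)"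
proof -
  have fin: "finite \<alpha>" and ne: "\<alpha> \<noteq> {}" and c: "card \<alpha> \<le> 2" using assms by (auto simp: admissible_def)
  have "card \<alpha> \<noteq> 0" using fin ne by simp
  hence "card \<alpha> = 1 \<or> card \<alpha> = 2" using c by linarith
  thus ?thesis
  proof
    assume "card \<alpha> = 1"
    then obtain a where a: "\<alpha> = {a}" by (rule card_1_singletonE)
    show ?thesis unfolding a using LA.distortion_one[of a] LA.ID_gt[of a] by auto
  next
    assume "card \<alpha> = 2"
    then obtain a b where ab: "\<alpha> = {a, b}" "a \<noteq> b" by (auto simp: card_2_iff)
    define f where "f x = (dist x b)^2 - (dist x a)^2" for x :: "real \<times> real"
    define A where "A = ((0::real), (0::real))"
    define B where "B = ((1::real), (0::real))"
    define C where "C = ((1::real)/2, sqrt 3 / 2)"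
    have pA: "LA.ps a b x = f x" "LA.ps b a x = - f x" for x by (simp_all add: LA.ps_def f_def)
    have pB: "LB.ps a b x = f x" "LB.ps b a x = - f x" for x by (simp_all add: LB.ps_def f_def)
    have pC: "LC.ps a b x = f x" "LC.ps b a x = - f x" for x by (simp_all add: LC.ps_def f_def)
    have ba: "{b, a} = {a, b}" by (rule insert_commute)
    have cases: "(f A > 0 \<and> f B \<le> 0 \<and> f C \<le> 0) \<or> (f B > 0 \<and> f A \<le> 0 \<and> f C \<le> 0) \<or> (f C > 0 \<and> f A \<le> 0 \<and> f B \<le> 0)
       \<or> (f A < 0 \<and> f B \<ge> 0 \<and> f C \<ge> 0) \<or> (f B < 0 \<and> f A \<ge> 0 \<and> f C \<ge> 0) \<or> (f C < 0 \<and> f A \<ge> 0 \<and> f B \<ge> 0)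
       \<or> (f A \<ge> 0 \<and> f B \<ge> 0 \<and> f C \<ge> 0) \<or> (f A \<le> 0 \<and> f B \<le> 0 \<and> f C \<le> 0)"
      by linarith
    show ?thesis
    proof -
      { assume h: "f A > 0 \<and> f B \<le> 0 \<and> f C \<le> 0"
        have ?thesis using LA.lower[of a b] h unfolding pA ab(1) OA_def A_def B_def C_def by auto }
      moreover
      { assume h: "f B > 0 \<and> f A \<le> 0 \<and> f C \<le> 0"
        have ?thesis using LB.lower[of a b] h unfolding pB ab(1) OB_def A_def B_def C_def by auto }
      moreover
      { assume h: "f C > 0 \<and> f A \<le> 0 \<and> f B \<le> 0"
        have ?thesis using LC.lower[of a b] h unfolding pC ab(1) OC_def A_def B_def C_def by auto }
      moreover
      { assume h: "f A < 0 \<and> f B \<ge> 0 \<and> f C \<ge> 0"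
        have ?thesis using LA.lower[of b a] h unfolding pA ab(1) ba OA_def A_def B_def C_def by auto }
      moreover
      { assume h: "f B < 0 \<and> f A \<ge> 0 \<and> f C \<ge> 0"
        have ?thesis using LB.lower[of b a] h unfolding pB ab(1) ba OB_def A_def B_def C_def by auto }
      moreover
      { assume h: "f C < 0 \<and> f A \<ge> 0 \<and> f B \<ge> 0"
        have ?thesis using LC.lower[of b a] h unfolding pC ab(1) ba OC_def A_def B_def C_def by auto }
      moreover
      { assume h: "f A \<ge> 0 \<and> f B \<ge> 0 \<and> f C \<ge> 0"
        have "distortion P_tri {a, b} = ennreal (2 * LA.ID a)"
          using h by (intro LA.distortion_noSplit) (simp_all add: pA A_def B_def C_def)
        hence ?thesis unfolding ab(1) using LA.ID_gt[of a] by auto }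
      moreover
      { assume h: "f A \<le> 0 \<and> f B \<le> 0 \<and> f C \<le> 0"
        have "distortion P_tri {b, a} = ennreal (2 * LA.ID b)"
          using h by (intro LA.distortion_noSplit) (simp_all add: pA A_def B_def C_def)
        hence ?thesis unfolding ab(1) ba using LA.ID_gt[of b] by auto }
      ultimately show ?thesis using cases by blast
    qed
  qed
qed


lemma QE: "quant_err P_tri 2 = ennreal Vs"
proof (rule antisym)
  show "quant_err P_tri 2 \<le> ennreal Vs"
    unfolding quant_err_def using adm_O(1) dist_O(1) by (metis (mono_tags, lifting) INF_lower mem_Collect_eq)
  show "ennreal Vs \<le> quant_err P_tri 2"
    unfolding quant_err_def
  proof (rule INF_greatest)
    fix \<alpha> assume "\<alpha> \<in> {\<alpha>. admissible 2 \<alpha>}"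
    then obtain d where "distortion P_tri \<alpha> = ennreal d" "Vs \<le> d" using lower_all by blast
    thus "ennreal Vs \<le> distortion P_tri \<alpha>" by (simp add: ennreal_leI)
  qed
qed

lemma OPT: "optimal_set P_tri 2 \<alpha> \<longleftrightarrow> \<alpha> = OA \<or> \<alpha> = OB \<or> \<alpha> = OC"
proof
  assume "optimal_set P_tri 2 \<alpha>"
  hence adm: "admissible 2 \<alpha>" and e: "distortion P_tri \<alpha> = ennreal Vs" by (auto simp: optimal_set_def QE)
  obtain d where d: "distortion P_tri \<alpha> = ennreal d" "Vs \<le> d" "d = Vs \<longrightarrow> \<alpha> = OA \<or> \<alpha> = OB \<or> \<alpha> = OC"
    using lower_all[OF adm] by blast
  have "d = Vs" using d(1,2) e Vs_pos by (simp add: ennreal_inj)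
  thus "\<alpha> = OA \<or> \<alpha> = OB \<or> \<alpha> = OC" using d(3) by simp
next
  assume "\<alpha> = OA \<or> \<alpha> = OB \<or> \<alpha> = OC"
  thus "optimal_set P_tri 2 \<alpha>" using adm_O dist_O by (auto simp: optimal_set_def QE)
qed

lemma Vs_num: "0.05327665 \<le> Vs" "Vs < 0.05327675"
proof -
  have v: "Vs = (23 - 10 * sqrt 5) / 12" by (simp add: Vs_def Gs_def sg_def field_simps)
  have "sqrt 5 \<le> sqrt (2.23606802^2)" by (subst real_sqrt_le_iff) (simp add: power2_eq_square)
  hence a: "sqrt 5 \<le> 2.23606802" by simp
  have "sqrt (2.2360679^2) < sqrt 5" by (subst real_sqrt_less_iff) (simp add: power2_eq_square)
  hence b: "2.2360679 < sqrt 5" by simp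
  show "0.05327665 \<le> Vs" unfolding v using a by simp
  show "Vs < 0.05327675" unfolding v using b by simp
qed

theorem theorem3p1:
  shows "card {\<alpha>. optimal_set P_tri 2 \<alpha>} = 3
    \<and> (\<exists>v. quant_err P_tri 2 = ennreal v \<and> 0.05327665 \<le> v \<and> v < 0.05327675)
    \<and> (\<forall>p \<in> {(0,0), (1,0), (1/2, sqrt 3 / 2)}. \<forall>t::real. 0 < t \<and> t < 1 \<longrightarrow>
        (let small = (\<lambda>x. p + t *\<^sub>R (x - p)) ` tri; trap = tri - small in
          measure lborel trap / measure lborel small = golden \<longrightarrow>
          optimal_set P_tri 2 {centroid trap, centroid small}))"
proof (intro conjI)
  have "{\<alpha>. optimal_set P_tri 2 \<alpha>} = {OA, OB, OC}" using OPT by auto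
  thus "card {\<alpha>. optimal_set P_tri 2 \<alpha>} = 3" using sets_distinct by simp
  show "\<exists>v. quant_err P_tri 2 = ennreal v \<and> 0.05327665 \<le> v \<and> v < 0.05327675"
    using QE Vs_num by blast
  show "\<forall>p \<in> {(0,0), (1,0), (1/2, sqrt 3 / 2)}. \<forall>t::real. 0 < t \<and> t < 1 \<longrightarrow>
        (let small = (\<lambda>x. p + t *\<^sub>R (x - p)) ` tri; trap = tri - small in
          measure lborel trap / measure lborel small = golden \<longrightarrow>
          optimal_set P_tri 2 {centroid trap, centroid small})"
  proof (intro ballI allI impI)
    fix p :: "real \<times> real" and t :: real
    assume p: "p \<in> {(0,0), (1,0), (1/2, sqrt 3 / 2)}" and t: "0 < t \<and> t < 1"
    have t': "0 < t" "t < 1" using t by auto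
    have "p = (0,0) \<or> p = (1,0) \<or> p = (1/2, sqrt 3 / 2)" using p by simp
    thus "let small = (\<lambda>x. p + t *\<^sub>R (x - p)) ` tri; trap = tri - small in
          measure lborel trap / measure lborel small = golden \<longrightarrow>
          optimal_set P_tri 2 {centroid trap, centroid small}"
    proof (elim disjE)
      assume pe: "p = (0,0)"
      show ?thesis unfolding pe Let_def LA.sm_def[symmetric]
      proof
        assume "measure lborel (tri - LA.sm t) / measure lborel (LA.sm t) = golden"
        note g = LA.golden_opt[OF t' this]
        show "optimal_set P_tri 2 {centroid (tri - LA.sm t), centroid (LA.sm t)}"
          unfolding g using OPT by (simp add: OA_def insert_commute)
      qed
    next
      assume pe: "p = (1,0)"
      show ?thesis unfolding pe Let_def LB.sm_def[symmetric]
      proof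
        assume "measure lborel (tri - LB.sm t) / measure lborel (LB.sm t) = golden"
        note g = LB.golden_opt[OF t' this]
        show "optimal_set P_tri 2 {centroid (tri - LB.sm t), centroid (LB.sm t)}"
          unfolding g using OPT by (simp add: OB_def insert_commute)
      qed
    next
      assume pe: "p = (1/2, sqrt 3 / 2)"
      show ?thesis unfolding pe Let_def LC.sm_def[symmetric]
      proof
        assume "measure lborel (tri - LC.sm t) / measure lborel (LC.sm t) = golden"
        note g = LC.golden_opt[OF t' this]
        show "optimal_set P_tri 2 {centroid (tri - LC.sm t), centroid (LC.sm t)}"
          unfolding g using OPT by (simp add: OC_def insert_commute)
      qed
    qed
  qed
qed


end
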